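(* Let $K$ be an algebraically closed field of characteristic $0$ and let $X$ be a finite set of distinct points in $\mathbb{P}^1\times\mathbb{P}^1\times\mathbb{P}^1$ over $K$. Let $t_1=|\pi_1(X)|$ and $t_2=|\pi_2(X)|$. For every integer $k\ge 0$, \[ r_{k+1}(X)=d_{t_1-1,t_2-1,k}-d_{t_1-1,t_2-1,k+1}=2H_X(t_1-1,t_2-1,k)-H_X(t_1-1,t_2-1,k-1)-H_X(t_1-1,t_2-1,k+1). \]
   Context: Let $R=K[x_0,x_1,y_0,y_1,z_0,z_1]$ be $\mathbb{N}^3$-graded with $\deg x_i=(1,0,0)$, $\deg y_i=(0,1,0)$, $\deg z_i=(0,0,1)$. For a point $P=[a_0:a_1]\times[b_0:b_1]\times[c_0:c_1]$, $I(P)=(a_1x_0-a_0x_1,\,b_1y_0-b_0y_1,\,c_1z_0-c_0z_1)$, and for $X=\{P_1,\dots,P_s\}$, $I(X)=\bigcap_i I(P_i)$. The Hilbert function is $H_X(i,j,k)=\dim_K R_{i,j,k}-\dim_K I(X)_{i,j,k}$ for $(i,j,k)\in\mathbb{N}^3$, and $H_X(a,b,c)=0$ if some coordinate of $(a,b,c)$ is negative. $\pi_i:\mathbb{P}^1\times\mathbb{P}^1\times\mathbb{P}^1\to\mathbb{P}^1$ is the projection to the $i$-th factor. A line of type $(1,1,0)$ is the subvariety defined by an ideal $(L,L')$ with $L\in R_{1,0,0}$, $L'\in R_{0,1,0}$ nonzero. For $i\ge1$, $r_i(X)$ is the number of lines of type $(1,1,0)$ containing exactly $i$ points of $X$. Set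 $d_{i,j,k}=H_X(i,j,k)-H_X(i,j,k-1)$. *)

theory Defs
  imports "HOL-Library.Poly_Mapping" "HOL-Computational_Algebra.Polynomial"
begin

datatype var = X0 | X1 | Y0 | Y1 | Z0 | Z1

type_synonym 'a mpoly6 = "(var \<Rightarrow>\<^sub>0 nat) \<Rightarrow>\<^sub>0 'a"

definition Var :: "var \<Rightarrow> 'a::comm_ring_1 mpoly6" where
  "Var v = Poly_Mapping.single (Poly_Mapping.single v 1) 1"

definition Const :: "'a::comm_ring_1 \<Rightarrow> 'a mpoly6" where
  "Const c = Poly_Mapping.single 0 c"

definition scaleR6 :: "'a::field \<Rightarrow> 'a mpoly6 \<Rightarrow> 'a mpoly6" where
  "scaleR6 c F = Poly_Mapping.map (\<lambda>x. c * x) F"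

definition mdeg :: "(var \<Rightarrow>\<^sub>0 nat) \<Rightarrow> nat \<times> nat \<times> nat" where
  "mdeg m = (Poly_Mapping.lookup m X0 + Poly_Mapping.lookup m X1, Poly_Mapping.lookup m Y0 + Poly_Mapping.lookup m Y1, Poly_Mapping.lookup m Z0 + Poly_Mapping.lookup m Z1)"

definition Rdeg :: "nat \<Rightarrow> nat \<Rightarrow> nat \<Rightarrow> 'a::comm_ring_1 mpoly6 set" where
  "Rdeg i j k = {F. \<forall>m \<in> Poly_Mapping.keys F. mdeg m = (i, j, k)}"

text \<open>A point [a0:a1] x [b0:b1] x [c0:c1] is given by a representative triple of
  nonzero vectors ((a0,a1),(b0,b1),(c0,c1)).\<close>
type_synonym 'a pt3 = "('a \<times> 'a) \<times> ('a \<times> 'a) \<times> ('a \<times> 'a)"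

definition valid_pt :: "'a::field pt3 \<Rightarrow> bool" where
  "valid_pt P = (case P of (u, v, w) \<Rightarrow> u \<noteq> (0,0) \<and> v \<noteq> (0,0) \<and> w \<noteq> (0,0))"

definition proj_eq :: "'a::field \<times> 'a \<Rightarrow> 'a \<times> 'a \<Rightarrow> bool" where
  "proj_eq u v = (fst u * snd v = snd u * fst v)"

definition same_point :: "'a::field pt3 \<Rightarrow> 'a pt3 \<Rightarrow> bool" where
  "same_point P Q = (proj_eq (fst P) (fst Q) \<and> proj_eq (fst (snd P)) (fst (snd Q))
                      \<and> proj_eq (snd (snd P)) (snd (snd Q)))"

definition point_set :: "'a::field pt3 set \<Rightarrow> bool" where
  "point_set X = (finite X \<and> (\<forall>P\<in>X. valid_pt P) \<and>
      (\<forall>P\<in>X. \<forall>Q\<in>X. same_point P Q \<longrightarrow> P = Q))"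

definition p1class :: "'a::field \<times> 'a \<Rightarrow> ('a \<times> 'a) set" where
  "p1class u = {v. v \<noteq> (0,0) \<and> proj_eq v u}"

definition t1 :: "'a::field pt3 set \<Rightarrow> nat" where
  "t1 X = card ((\<lambda>P. p1class (fst P)) ` X)"

definition t2 :: "'a::field pt3 set \<Rightarrow> nat" where
  "t2 X = card ((\<lambda>P. p1class (fst (snd P))) ` X)"

definition ideal_pt :: "'a::field pt3 \<Rightarrow> 'a mpoly6 set" where
  "ideal_pt P = (case P of ((a0, a1), (b0, b1), (c0, c1)) \<Rightarrow>
     {(Const a1 * Var X0 - Const a0 * Var X1) * G1
      + (Const b1 * Var Y0 - Const b0 * Var Y1) * G2
      + (Const c1 * Var Z0 - Const c0 * Var Z1) * G3 | G1 G2 G3. True})"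

definition ideal_X :: "'a::field pt3 set \<Rightarrow> 'a mpoly6 set" where
  "ideal_X X = (\<Inter>P\<in>X. ideal_pt P)"

definition vdim :: "'a::field mpoly6 set \<Rightarrow> nat" where
  "vdim V = vector_space.dim scaleR6 V"

definition HX :: "'a::field pt3 set \<Rightarrow> int \<Rightarrow> int \<Rightarrow> int \<Rightarrow> int" where
  "HX X i j k = (if i < 0 \<or> j < 0 \<or> k < 0 then 0 else
     int (vdim (Rdeg (nat i) (nat j) (nat k) :: 'a mpoly6 set))
     - int (vdim (ideal_X X \<inter> Rdeg (nat i) (nat j) (nat k))))"

definition dX :: "'a::field pt3 set \<Rightarrow> int \<Rightarrow> int \<Rightarrow> int \<Rightarrow> int" where
  "dX X i j k = HX X i j k - HX X i j (k - 1)"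

text \<open>The line defined by (L, L') with L = l0 x0 + l1 x1, L' = m0 y0 + m1 y1 nonzero,
  as the set of (representatives of) points of P1 x P1 x P1 on which L and L' vanish.\<close>
definition line110 :: "'a::field \<times> 'a \<Rightarrow> 'a \<times> 'a \<Rightarrow> 'a pt3 set" where
  "line110 l m = {Q. valid_pt Q \<and>
      fst l * fst (fst Q) + snd l * snd (fst Q) = 0 \<and>
      fst m * fst (fst (snd Q)) + snd m * snd (fst (snd Q)) = 0}"

definition is_line110 :: "'a::field pt3 set \<Rightarrow> bool" where
  "is_line110 L = (\<exists>l m. l \<noteq> (0,0) \<and> m \<noteq> (0,0) \<and> L = line110 l m)"

definition r_lines :: "nat \<Rightarrow> 'a::field pt3 set \<Rightarrow> nat" where
  "r_lines i X = card {L. is_line110 L \<and> card (X \<inter> L) = i}"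

definition alg_closed :: "'a::field itself \<Rightarrow> bool" where
  "alg_closed _ = (\<forall>p :: 'a poly. degree p > 0 \<longrightarrow> (\<exists>x. poly p x = 0))"

end

theory Submission
  imports Defs "HOL-Library.Function_Algebras"
begin


lemma Const_mult: "Const (a*b) = (Const a * Const b :: 'a::comm_ring_1 mpoly6)"
  by (simp add: Const_def mult_single)
lemma Const_add: "Const (a+b) = (Const a + Const b :: 'a::comm_ring_1 mpoly6)"
  by (simp add: Const_def single_add)
lemma Const_diff: "Const (a-b) = (Const a - Const b :: 'a::comm_ring_1 mpoly6)"
  by (simp add: Const_def single_diff)
lemma Const_1: "Const 1 = (1 :: 'a::comm_ring_1 mpoly6)"
  by (simp add: Const_def)
lemma Const_0: "Const 0 = (0 :: 'a::comm_ring_1 mpoly6)"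
  by (simp add: Const_def)
lemma Const_power: "Const (a^n) = (Const a ^ n :: 'a::comm_ring_1 mpoly6)"
  by (induct n) (simp_all add: Const_1 Const_mult)

lemma scaleR6_Const: "scaleR6 c F = Const c * F"
  by (simp add: scaleR6_def Const_def mult_map_scale_conv_mult)

lemma vs6: "vector_space (scaleR6 :: 'a::field \<Rightarrow> 'a mpoly6 \<Rightarrow> 'a mpoly6)"
  by unfold_locales (simp_all add: scaleR6_Const Const_add Const_mult algebra_simps Const_1)

definition mon :: "(var \<Rightarrow>\<^sub>0 nat) \<Rightarrow> 'a::comm_ring_1 mpoly6" where
  "mon m = Poly_Mapping.single m 1"

lemma poly_expand: "F = (\<Sum>m\<in>Poly_Mapping.keys F. Poly_Mapping.single m (Poly_Mapping.lookup F m))"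
  by (rule poly_mapping_eqI)
     (auto simp: lookup_sum lookup_single when_def in_keys_iff sum.delta[OF finite_keys] cong: if_cong)

definition mv :: "'a::comm_ring_1 pt3 \<Rightarrow> (var \<Rightarrow>\<^sub>0 nat) \<Rightarrow> 'a" where
 "mv P m = fst (fst P) ^ Poly_Mapping.lookup m X0 * snd (fst P) ^ Poly_Mapping.lookup m X1
   * fst (fst (snd P)) ^ Poly_Mapping.lookup m Y0 * snd (fst (snd P)) ^ Poly_Mapping.lookup m Y1
   * fst (snd (snd P)) ^ Poly_Mapping.lookup m Z0 * snd (snd (snd P)) ^ Poly_Mapping.lookup m Z1"

definition ev :: "'a::comm_ring_1 pt3 \<Rightarrow> 'a mpoly6 \<Rightarrow> 'a" where
 "ev P F = (\<Sum>m\<in>Poly_Mapping.keys F. Poly_Mapping.lookup F m * mv P m)"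

lemma mv_add: "mv P (m + n) = mv P m * mv P n"
  by (simp add: mv_def lookup_add power_add algebra_simps)

lemma mv_0: "mv P 0 = 1"
  by (simp add: mv_def)

lemma ev_superset: "finite S \<Longrightarrow> Poly_Mapping.keys F \<subseteq> S \<Longrightarrow>
   ev P F = (\<Sum>m\<in>S. Poly_Mapping.lookup F m * mv P m)"
  unfolding ev_def
  by (rule sum.mono_neutral_left) (auto simp: in_keys_iff)

lemma ev_add: "ev P (F + G) = ev P F + ev P G"
proof -
  let ?S = "Poly_Mapping.keys F \<union> Poly_Mapping.keys G"
  have "ev P (F+G) = (\<Sum>m\<in>?S. Poly_Mapping.lookup (F+G) m * mv P m)"
    by (rule ev_superset) (auto simp: keys_add)
  also have "\<dots> = (\<Sum>m\<in>?S. Poly_Mapping.lookup F m * mv P m) + (\<Sum>m\<in>?S. Poly_Mapping.lookup G m * mv P m)"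
    by (simp add: lookup_add algebra_simps sum.distrib)
  also have "\<dots> = ev P F + ev P G"
    by (simp add: ev_superset[of ?S])
  finally show ?thesis .
qed

lemma ev_zero[simp]: "ev P 0 = 0"
  by (simp add: ev_def)

lemma ev_single: "ev P (Poly_Mapping.single m c) = c * mv P m"
  by (cases "c = 0") (simp_all add: ev_def)

lemma ev_sum: "ev P (sum g A) = (\<Sum>a\<in>A. ev P (g a))"
  by (induct A rule: infinite_finite_induct) (simp_all add: ev_add)

lemma ev_uminus: "ev P (- F) = - ev P F"
  using ev_add[of P F "-F"] by (simp add: eq_neg_iff_add_eq_0 add.commute)

lemma ev_diff: "ev P (F - G) = ev P F - ev P G"
  using ev_add[of P F "-G"] by (simp add: ev_uminus)

lemma ev_mult: "ev P (F * G) = ev P F * ev P G"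
proof -
  have "F * G = (\<Sum>m\<in>Poly_Mapping.keys F. Poly_Mapping.single m (Poly_Mapping.lookup F m))
     * (\<Sum>n\<in>Poly_Mapping.keys G. Poly_Mapping.single n (Poly_Mapping.lookup G n))"
    by (subst poly_expand[of F], subst poly_expand[of G]) (rule refl)
  also have "\<dots> = (\<Sum>m\<in>Poly_Mapping.keys F. \<Sum>n\<in>Poly_Mapping.keys G.
       Poly_Mapping.single (m+n) (Poly_Mapping.lookup F m * Poly_Mapping.lookup G n))"
    by (simp add: sum_distrib_left sum_distrib_right mult_single sum.swap[of _ "Poly_Mapping.keys G"])
  finally have "ev P (F*G) = (\<Sum>m\<in>Poly_Mapping.keys F. \<Sum>n\<in>Poly_Mapping.keys G.
       (Poly_Mapping.lookup F m * mv P m) * (Poly_Mapping.lookup G n * mv P n))"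
    by (simp add: ev_sum ev_single mv_add algebra_simps)
  also have "\<dots> = ev P F * ev P G"
    by (simp add: ev_def sum_product)
  finally show ?thesis .
qed

lemma ev_Const: "ev P (Const c) = c"
  by (simp add: Const_def ev_single mv_0)

lemma ev_Var: "ev P (Var X0) = fst (fst P)" "ev P (Var X1) = snd (fst P)"
  "ev P (Var Y0) = fst (fst (snd P))" "ev P (Var Y1) = snd (fst (snd P))"
  "ev P (Var Z0) = fst (snd (snd P))" "ev P (Var Z1) = snd (snd (snd P))"
  by (simp_all add: Var_def ev_single mv_def lookup_single)

lemma ev_power: "ev P (F ^ n) = ev P F ^ n"
  by (induct n) (simp_all add: ev_mult flip: Const_1 add: ev_Const)

lemma ev_prod: "ev P (prod g A) = (\<Prod>a\<in>A. ev P (g a))"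
  by (induct A rule: infinite_finite_induct) (simp_all add: ev_mult flip: Const_1 add: ev_Const)



lemma mdeg_add: "mdeg (a + b) = (fst (mdeg a) + fst (mdeg b), fst (snd (mdeg a)) + fst (snd (mdeg b)),
   snd (snd (mdeg a)) + snd (snd (mdeg b)))"
  by (simp add: mdeg_def lookup_add)

lemma Rdeg_zero[simp]: "0 \<in> Rdeg i j k"
  by (simp add: Rdeg_def)

lemma Rdeg_add: "F \<in> Rdeg i j k \<Longrightarrow> G \<in> Rdeg i j k \<Longrightarrow> F + G \<in> Rdeg i j k"
  unfolding Rdeg_def using keys_add[of F G] by blast

lemma Rdeg_uminus: "F \<in> Rdeg i j k \<Longrightarrow> - F \<in> Rdeg i j k"
  unfolding Rdeg_def by (simp add: keys_minus)

lemma Rdeg_diff: "F \<in> Rdeg i j k \<Longrightarrow> G \<in> Rdeg i j k \<Longrightarrow> F - G \<in> Rdeg i j k"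
  using Rdeg_add[OF _ Rdeg_uminus] by (metis diff_conv_add_uminus)

lemma Rdeg_mult: "F \<in> Rdeg i j k \<Longrightarrow> G \<in> Rdeg i' j' k' \<Longrightarrow> F * G \<in> Rdeg (i+i') (j+j') (k+k')"
  unfolding Rdeg_def mem_Collect_eq
proof (intro ballI)
  fix m assume F: "\<forall>m\<in>Poly_Mapping.keys F. mdeg m = (i, j, k)" and G: "\<forall>m\<in>Poly_Mapping.keys G. mdeg m = (i', j', k')"
    and m: "m \<in> Poly_Mapping.keys (F * G)"
  then obtain a b where "m = a + b" "a \<in> Poly_Mapping.keys F" "b \<in> Poly_Mapping.keys G"
    using keys_mult[of F G] by blast
  then show "mdeg m = (i + i', j + j', k + k')" using F G by (simp add: mdeg_add)
qed

lemma Rdeg_sum: "(\<And>a. a \<in> A \<Longrightarrow> g a \<in> Rdeg i j k) \<Longrightarrow> sum g A \<in> Rdeg i j k"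
  by (induct A rule: infinite_finite_induct) (simp_all add: Rdeg_add)

lemma Rdeg_Const: "Const c \<in> Rdeg 0 0 0"
  by (simp add: Rdeg_def Const_def mdeg_def)

lemma Rdeg_one: "1 \<in> Rdeg 0 0 0"
  using Rdeg_Const[of 1] by (simp add: Const_1)

lemma Rdeg_scale: "F \<in> Rdeg i j k \<Longrightarrow> Const c * F \<in> Rdeg i j k"
  using Rdeg_mult[OF Rdeg_Const] by fastforce

lemma Rdeg_Var: "Var X0 \<in> Rdeg 1 0 0" "Var X1 \<in> Rdeg 1 0 0"
  "Var Y0 \<in> Rdeg 0 1 0" "Var Y1 \<in> Rdeg 0 1 0" "Var Z0 \<in> Rdeg 0 0 1" "Var Z1 \<in> Rdeg 0 0 1"
  by (simp_all add: Rdeg_def Var_def mdeg_def lookup_single)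

lemma Rdeg_power: "F \<in> Rdeg i j k \<Longrightarrow> F ^ n \<in> Rdeg (n*i) (n*j) (n*k)"
  by (induct n) (simp_all add: Rdeg_one Rdeg_mult)

lemma Rdeg_prod: "(\<And>a. a \<in> A \<Longrightarrow> g a \<in> Rdeg i j k) \<Longrightarrow> prod g A \<in> Rdeg (card A * i) (card A * j) (card A * k)"
proof (induct A rule: infinite_finite_induct)
  case (insert x F)
  then have "g x * prod g F \<in> Rdeg (i + card F * i) (j + card F * j) (k + card F * k)"
    by (intro Rdeg_mult) auto
  then show ?case using insert by simp
qed (simp_all add: Rdeg_one)

lemma Rdeg_in_keys: "F \<in> Rdeg i j k \<Longrightarrow> m \<in> Poly_Mapping.keys F \<Longrightarrow> mdeg m = (i,j,k)"
  by (simp add: Rdeg_def)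

lemma Rdeg_mon: "mdeg m = (i,j,k) \<Longrightarrow> mon m \<in> Rdeg i j k"
  by (simp add: Rdeg_def mon_def)

lemma pm_expand6: "m = Poly_Mapping.single X0 (Poly_Mapping.lookup m X0) + Poly_Mapping.single X1 (Poly_Mapping.lookup m X1)
  + Poly_Mapping.single Y0 (Poly_Mapping.lookup m Y0) + Poly_Mapping.single Y1 (Poly_Mapping.lookup m Y1)
  + Poly_Mapping.single Z0 (Poly_Mapping.lookup m Z0) + Poly_Mapping.single Z1 (Poly_Mapping.lookup m Z1)"
  apply (rule poly_mapping_eqI)
  subgoal for v by (cases v) (simp_all add: lookup_add lookup_single when_def)
  done

lemma finite_mdeg: "finite {m. mdeg m = (i,j,k)}"
proof -
  let ?f = "\<lambda>(p,q,r,s,t,u). Poly_Mapping.single X0 p + Poly_Mapping.single X1 q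
  + Poly_Mapping.single Y0 r + Poly_Mapping.single Y1 s
  + Poly_Mapping.single Z0 t + Poly_Mapping.single Z1 u"
  have "{m. mdeg m = (i,j,k)} \<subseteq> ?f ` ({..i}\<times>{..i}\<times>{..j}\<times>{..j}\<times>{..k}\<times>{..k})"
  proof
    fix m assume "m \<in> {m. mdeg m = (i,j,k)}"
    then have "mdeg m = (i,j,k)" by simp
    then show "m \<in> ?f ` ({..i}\<times>{..i}\<times>{..j}\<times>{..j}\<times>{..k}\<times>{..k})"
      by (intro image_eqI[where x="(Poly_Mapping.lookup m X0, Poly_Mapping.lookup m X1, Poly_Mapping.lookup m Y0,
          Poly_Mapping.lookup m Y1, Poly_Mapping.lookup m Z0, Poly_Mapping.lookup m Z1)"])
         (auto simp: mdeg_def intro: pm_expand6)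
  qed
  then show ?thesis by (rule finite_subset) simp
qed

lemma Var_power: "Var v ^ n = (Poly_Mapping.single (Poly_Mapping.single v n) 1 :: 'a::comm_ring_1 mpoly6)"
  by (induct n) (simp_all add: Var_def mult_single single_add[symmetric] add.commute)

lemma mon_add: "mon (a + b) = (mon a * mon b :: 'a::comm_ring_1 mpoly6)"
  by (simp add: mon_def mult_single)

lemma mon_Var: "(mon m :: 'a::comm_ring_1 mpoly6) = Var X0 ^ Poly_Mapping.lookup m X0 * Var X1 ^ Poly_Mapping.lookup m X1
  * Var Y0 ^ Poly_Mapping.lookup m Y0 * Var Y1 ^ Poly_Mapping.lookup m Y1
  * Var Z0 ^ Poly_Mapping.lookup m Z0 * Var Z1 ^ Poly_Mapping.lookup m Z1"
  apply (subst pm_expand6)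
  apply (simp only: mon_add Var_power)
  apply (simp add: mon_def)
  done

lemma mon_expand: "F = (\<Sum>m\<in>Poly_Mapping.keys F. Const (Poly_Mapping.lookup F m) * mon m)"
  by (subst poly_expand) (simp add: Const_def mon_def mult_single)

lemma ev_mon: "ev P (mon m) = mv P m"
  by (simp add: mon_def ev_single)

interpretation v6: vector_space "scaleR6 :: 'a::field \<Rightarrow> 'a mpoly6 \<Rightarrow> 'a mpoly6"
  by (rule vs6)

lemma Rdeg_span: "(Rdeg i j k :: 'a::field mpoly6 set) \<subseteq> v6.span (mon ` {m. mdeg m = (i,j,k)})"
proof
  fix F :: "'a mpoly6" assume F: "F \<in> Rdeg i j k"
  have "F = (\<Sum>m\<in>Poly_Mapping.keys F. scaleR6 (Poly_Mapping.lookup F m) (mon m))"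
    by (subst mon_expand) (simp add: scaleR6_Const)
  also have "\<dots> \<in> v6.span (mon ` {m. mdeg m = (i,j,k)})"
    using F by (intro v6.span_sum v6.span_scale v6.span_base) (auto simp: Rdeg_def)
  finally show "F \<in> v6.span (mon ` {m. mdeg m = (i,j,k)})" .
qed

lemma Rdeg_subspace: "v6.subspace (Rdeg i j k :: 'a::field mpoly6 set)"
  unfolding v6.subspace_def by (simp add: Rdeg_add scaleR6_Const Rdeg_scale)



lemma dvd_power_diff: "(x - y) dvd (x ^ n - y ^ n :: 'r::comm_ring_1)"
  unfolding dvd_def using power_diff_sumr2[of x n y] by blast

lemma grp_lemma:
  fixes x0 x1 a0 a1 :: "'r::comm_ring_1"
  shows "(a1 * x0 - a0 * x1) dvd (a0^(p+q) * (x0^p * x1^q) - a0^p * a1^q * x0^(p+q))"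
    and "(a1 * x0 - a0 * x1) dvd (a1^(p+q) * (x0^p * x1^q) - a0^p * a1^q * x1^(p+q))"
proof -
  have "(a0*x1 - a1*x0) dvd ((a0*x1)^q - (a1*x0)^q)" by (rule dvd_power_diff)
  then have "(a1 * x0 - a0 * x1) dvd ((a0*x1)^q - (a1*x0)^q)"
    using minus_dvd_iff[of "a0*x1 - a1*x0" "(a0*x1)^q - (a1*x0)^q"] by simp
  then have "(a1 * x0 - a0 * x1) dvd (a0^p * x0^p * ((a0*x1)^q - (a1*x0)^q))"
    by (rule dvd_mult)
  moreover have "a0^p * x0^p * ((a0*x1)^q - (a1*x0)^q) = a0^(p+q) * (x0^p * x1^q) - a0^p * a1^q * x0^(p+q)"
    by (simp add: power_add power_mult_distrib algebra_simps)
  ultimately show "(a1 * x0 - a0 * x1) dvd (a0^(p+q) * (x0^p * x1^q) - a0^p * a1^q * x0^(p+q))" by simp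
next
  have "(a1 * x0 - a0 * x1) dvd ((a1*x0)^p - (a0*x1)^p)" by (rule dvd_power_diff)
  then have "(a1 * x0 - a0 * x1) dvd (a1^q * x1^q * ((a1*x0)^p - (a0*x1)^p))"
    by (rule dvd_mult)
  moreover have "a1^q * x1^q * ((a1*x0)^p - (a0*x1)^p) = a1^(p+q) * (x0^p * x1^q) - a0^p * a1^q * x1^(p+q)"
    by (simp add: power_add power_mult_distrib algebra_simps)
  ultimately show "(a1 * x0 - a0 * x1) dvd (a1^(p+q) * (x0^p * x1^q) - a0^p * a1^q * x1^(p+q))" by simp
qed

definition idl3 :: "'r::comm_ring_1 \<Rightarrow> 'r \<Rightarrow> 'r \<Rightarrow> 'r set" where
  "idl3 L1 L2 L3 = {L1 * G1 + L2 * G2 + L3 * G3 | G1 G2 G3. True}"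

lemma ideal_pt_idl3: "ideal_pt ((a0,a1),(b0,b1),(c0,c1)) =
  idl3 (Const a1 * Var X0 - Const a0 * Var X1) (Const b1 * Var Y0 - Const b0 * Var Y1) (Const c1 * Var Z0 - Const c0 * Var Z1)"
  by (simp add: ideal_pt_def idl3_def)

lemma idl3_add: assumes "F \<in> idl3 L1 L2 L3" "G \<in> idl3 L1 L2 L3" shows "F + G \<in> idl3 L1 L2 L3"
proof -
  obtain G1 G2 G3 where F: "F = L1 * G1 + L2 * G2 + L3 * G3" using assms(1) by (auto simp: idl3_def)
  obtain H1 H2 H3 where G: "G = L1 * H1 + L2 * H2 + L3 * H3" using assms(2) by (auto simp: idl3_def)
  have "F + G = L1 * (G1+H1) + L2 * (G2+H2) + L3 * (G3+H3)" by (simp add: F G algebra_simps)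
  then show ?thesis unfolding idl3_def by blast
qed

lemma idl3_mult: assumes "F \<in> idl3 L1 L2 L3" shows "H * F \<in> idl3 L1 L2 L3"
proof -
  obtain G1 G2 G3 where F: "F = L1 * G1 + L2 * G2 + L3 * G3" using assms(1) by (auto simp: idl3_def)
  have "H * F = L1 * (H*G1) + L2 * (H*G2) + L3 * (H*G3)" by (simp add: F algebra_simps)
  then show ?thesis unfolding idl3_def by blast
qed

lemma idl3_zero: "0 \<in> idl3 L1 L2 L3"
  unfolding idl3_def by (rule CollectI, rule exI[of _ 0], rule exI[of _ 0], rule exI[of _ 0]) simp

lemma idl3_diff: "F \<in> idl3 L1 L2 L3 \<Longrightarrow> G \<in> idl3 L1 L2 L3 \<Longrightarrow> F - G \<in> idl3 L1 L2 L3"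
  using idl3_add[of F L1 L2 L3 "(-1) * G"] idl3_mult[of G L1 L2 L3 "-1"] by simp

lemma idl3_sum: "(\<And>a. a \<in> A \<Longrightarrow> g a \<in> idl3 L1 L2 L3) \<Longrightarrow> sum g A \<in> idl3 L1 L2 L3"
  by (induct A rule: infinite_finite_induct) (simp_all add: idl3_add idl3_zero)

lemma idl3_dvd1: "L1 dvd F \<Longrightarrow> F \<in> idl3 L1 L2 L3"
proof -
  assume "L1 dvd F" then obtain k where "F = L1 * k" by (auto simp: dvd_def)
  then have "F = L1 * k + L2 * 0 + L3 * 0" by simp
  then show ?thesis unfolding idl3_def by blast
qed
lemma idl3_dvd2: "L2 dvd F \<Longrightarrow> F \<in> idl3 L1 L2 L3"
proof -
  assume "L2 dvd F" then obtain k where "F = L2 * k" by (auto simp: dvd_def)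
  then have "F = L1 * 0 + L2 * k + L3 * 0" by simp
  then show ?thesis unfolding idl3_def by blast
qed
lemma idl3_dvd3: "L3 dvd F \<Longrightarrow> F \<in> idl3 L1 L2 L3"
proof -
  assume "L3 dvd F" then obtain k where "F = L3 * k" by (auto simp: dvd_def)
  then have "F = L1 * 0 + L2 * 0 + L3 * k" by simp
  then show ?thesis unfolding idl3_def by blast
qed

lemma idl3_prod3:
  assumes "A - A' \<in> idl3 L1 L2 L3" "B - B' \<in> idl3 L1 L2 L3" "C - C' \<in> idl3 L1 L2 L3"
  shows "A * B * C - A' * B' * C' \<in> idl3 L1 L2 L3"
proof -
  have "A * B * C - A' * B' * C' = (B * C) * (A - A') + (A' * C) * (B - B') + (A' * B') * (C - C')"
    by (simp add: algebra_simps)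
  then show ?thesis using assms by (simp add: idl3_add idl3_mult)
qed

lemma ev_ideal_pt: "F \<in> ideal_pt P \<Longrightarrow> ev P F = 0"
proof -
  obtain a0 a1 b0 b1 c0 c1 where P: "P = ((a0,a1),(b0,b1),(c0,c1))" by (metis prod.exhaust)
  assume "F \<in> ideal_pt P"
  then obtain G1 G2 G3 where "F = (Const a1 * Var X0 - Const a0 * Var X1) * G1 + (Const b1 * Var Y0 - Const b0 * Var Y1) * G2 + (Const c1 * Var Z0 - Const c0 * Var Z1) * G3"
    by (auto simp: P ideal_pt_idl3 idl3_def)
  then show ?thesis
    by (simp only: P ev_add ev_mult ev_diff ev_Const ev_Var) (simp add: algebra_simps)
qed

lemma Const_sum: "Const (sum g A) = (\<Sum>a\<in>A. Const (g a) :: 'a::comm_ring_1 mpoly6)"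
  by (induct A rule: infinite_finite_induct) (simp_all add: Const_0 Const_add)

lemma vanish_ideal:
  fixes a0 a1 b0 b1 c0 c1 :: "'a::field"
  assumes nz: "(a0,a1) \<noteq> (0,0)" "(b0,b1) \<noteq> (0,0)" "(c0,c1) \<noteq> (0,0)"
    and F: "F \<in> Rdeg i j k" and ev0: "ev ((a0,a1),(b0,b1),(c0,c1)) F = 0"
  shows "F \<in> ideal_pt ((a0,a1),(b0,b1),(c0,c1))"
proof -
  define P where "P = ((a0,a1),(b0,b1),(c0,c1))"
  define I where "I = idl3 (Const a1 * Var X0 - Const a0 * Var X1) (Const b1 * Var Y0 - Const b0 * Var Y1) (Const c1 * Var Z0 - Const c0 * Var Z1 :: 'a mpoly6)"
  define Nx where "Nx = (if a0 \<noteq> 0 then Var X0 ^ i else Var X1 ^ i :: 'a mpoly6)"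
  define nx where "nx = (if a0 \<noteq> 0 then a0 ^ i else a1 ^ i)"
  define Ny where "Ny = (if b0 \<noteq> 0 then Var Y0 ^ j else Var Y1 ^ j :: 'a mpoly6)"
  define ny where "ny = (if b0 \<noteq> 0 then b0 ^ j else b1 ^ j)"
  define Nz where "Nz = (if c0 \<noteq> 0 then Var Z0 ^ k else Var Z1 ^ k :: 'a mpoly6)"
  define nz where "nz = (if c0 \<noteq> 0 then c0 ^ k else c1 ^ k)"
  have Isum: "\<And>g A. (\<And>a. a\<in>A \<Longrightarrow> g a \<in> I) \<Longrightarrow> sum g A \<in> I" unfolding I_def by (rule idl3_sum)
  have Imult: "\<And>F H. F \<in> I \<Longrightarrow> H * F \<in> I" unfolding I_def by (rule idl3_mult)
  have nn: "nx * ny * nz \<noteq> 0" using nz by (auto simp: nx_def ny_def nz_def)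
  have gx: "Const nx * (Var X0^p * Var X1^q) - Const (a0^p*a1^q) * Nx \<in> I" if "p + q = i" for p q
  proof (cases "a0 \<noteq> 0")
    case True
    then show ?thesis unfolding I_def nx_def Nx_def using that grp_lemma(1)[of "Const a1" "Var X0" "Const a0" "Var X1" p q, unfolded that]
      by (intro idl3_dvd1) (simp add: Const_power Const_mult)
  next
    case False
    then show ?thesis unfolding I_def nx_def Nx_def using that grp_lemma(2)[of "Const a1" "Var X0" "Const a0" "Var X1" p q, unfolded that]
      by (intro idl3_dvd1) (simp add: Const_power Const_mult)
  qed
  have gy: "Const ny * (Var Y0^p * Var Y1^q) - Const (b0^p*b1^q) * Ny \<in> I" if "p + q = j" for p q
  proof (cases "b0 \<noteq> 0")
    case True
    then show ?thesis unfolding I_def ny_def Ny_def using that grp_lemma(1)[of "Const b1" "Var Y0" "Const b0" "Var Y1" p q, unfolded that]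
      by (intro idl3_dvd2) (simp add: Const_power Const_mult)
  next
    case False
    then show ?thesis unfolding I_def ny_def Ny_def using that grp_lemma(2)[of "Const b1" "Var Y0" "Const b0" "Var Y1" p q, unfolded that]
      by (intro idl3_dvd2) (simp add: Const_power Const_mult)
  qed
  have gz: "Const nz * (Var Z0^p * Var Z1^q) - Const (c0^p*c1^q) * Nz \<in> I" if "p + q = k" for p q
  proof (cases "c0 \<noteq> 0")
    case True
    then show ?thesis unfolding I_def nz_def Nz_def using that grp_lemma(1)[of "Const c1" "Var Z0" "Const c0" "Var Z1" p q, unfolded that]
      by (intro idl3_dvd3) (simp add: Const_power Const_mult)
  next
    case False
    then show ?thesis unfolding I_def nz_def Nz_def using that grp_lemma(2)[of "Const c1" "Var Z0" "Const c0" "Var Z1" p q, unfolded that]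
      by (intro idl3_dvd3) (simp add: Const_power Const_mult)
  qed
  have gm: "Const (nx*ny*nz) * mon m - Const (mv P m) * (Nx*Ny*Nz) \<in> I" if m: "mdeg m = (i,j,k)" for m
  proof -
    let ?A = "Const nx * (Var X0^Poly_Mapping.lookup m X0 * Var X1^Poly_Mapping.lookup m X1)"
    let ?B = "Const ny * (Var Y0^Poly_Mapping.lookup m Y0 * Var Y1^Poly_Mapping.lookup m Y1)"
    let ?C = "Const nz * (Var Z0^Poly_Mapping.lookup m Z0 * Var Z1^Poly_Mapping.lookup m Z1)"
    let ?A' = "Const (a0^Poly_Mapping.lookup m X0*a1^Poly_Mapping.lookup m X1) * Nx"
    let ?B' = "Const (b0^Poly_Mapping.lookup m Y0*b1^Poly_Mapping.lookup m Y1) * Ny"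
    let ?C' = "Const (c0^Poly_Mapping.lookup m Z0*c1^Poly_Mapping.lookup m Z1) * Nz"
    have "?A * ?B * ?C - ?A' * ?B' * ?C' \<in> I"
      unfolding I_def
      apply (rule idl3_prod3)
      using m gx gy gz by (auto simp: mdeg_def I_def)
    moreover have "?A * ?B * ?C = Const (nx*ny*nz) * mon m"
      by (simp add: mon_Var Const_mult algebra_simps)
    moreover have "?A' * ?B' * ?C' = Const (mv P m) * (Nx*Ny*Nz)"
      by (simp add: mv_def P_def Const_mult algebra_simps)
    ultimately show ?thesis by simp
  qed
  have "Const (nx*ny*nz) * F - Const (ev P F) * (Nx*Ny*Nz)
     = (\<Sum>m\<in>Poly_Mapping.keys F. Const (Poly_Mapping.lookup F m) *
         (Const (nx*ny*nz) * mon m - Const (mv P m) * (Nx*Ny*Nz)))"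
  proof -
    have FE: "F = (\<Sum>m\<in>Poly_Mapping.keys F. Const (Poly_Mapping.lookup F m) * mon m)" by (rule mon_expand)
    have e1: "Const (nx*ny*nz) * F = Const (nx*ny*nz) * (\<Sum>m\<in>Poly_Mapping.keys F. Const (Poly_Mapping.lookup F m) * mon m)"
      by (simp only: FE[symmetric])
    have e2: "Const (ev P F) * (Nx*Ny*Nz) = (\<Sum>m\<in>Poly_Mapping.keys F. Const (Poly_Mapping.lookup F m) * (Const (mv P m) * (Nx*Ny*Nz)))"
      by (simp add: ev_def Const_sum Const_mult sum_distrib_right sum_distrib_left algebra_simps)
    show ?thesis unfolding e1 e2
      by (simp add: sum_distrib_left algebra_simps flip: sum_subtractf)
  qed
  also have "\<dots> \<in> I"
    using F by (intro Isum Imult gm) (auto simp: Rdeg_def)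
  finally have "Const (nx*ny*nz) * F \<in> I" using ev0 by (simp add: P_def Const_0)
  then have "Const (inverse (nx*ny*nz)) * (Const (nx*ny*nz) * F) \<in> I" by (rule Imult)
  moreover have "Const (inverse (nx*ny*nz)) * (Const (nx*ny*nz) * F) = F"
  proof -
    have "inverse (nx*ny*nz) * (nx*ny*nz) = 1" by (rule left_inverse[OF nn])
    then show ?thesis by (simp only: mult.assoc[symmetric] Const_mult[symmetric] Const_1 mult_1_left)
  qed
  ultimately have "F \<in> I" by simp
  then show ?thesis by (simp add: I_def ideal_pt_idl3)
qed



lemma rank_nullity_gen:
  assumes lin: "Vector_Spaces.linear s1 s2 f"
    and V: "module.subspace s1 V" and W: "finite W" "V \<subseteq> module.span s1 W"
  shows "vector_space.dim s1 V = vector_space.dim s1 (V \<inter> {x. f x = 0}) + vector_space.dim s2 (f ` V)"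
proof -
  interpret lf: Vector_Spaces.linear s1 s2 f by (rule lin)
  define K where "K = V \<inter> {x. f x = 0}"
  have KV: "K \<subseteq> V" by (auto simp: K_def)
  obtain BK where BK: "BK \<subseteq> K" "lf.vs1.independent BK" "K \<subseteq> lf.vs1.span BK" "card BK = lf.vs1.dim K"
    by (rule lf.vs1.basis_exists)
  obtain B where B: "BK \<subseteq> B" "B \<subseteq> V" "lf.vs1.independent B" "V \<subseteq> lf.vs1.span B"
    using lf.vs1.maximal_independent_subset_extend[of BK V] BK KV by blast
  have finB: "finite B"
    using lf.vs1.independent_span_bound[OF W(1) B(3)] B(2) W(2) by blast
  have finBK: "finite BK" using finB B(1) finite_subset by blast
  have dimV: "lf.vs1.dim V = card B"
    using lf.vs1.basis_card_eq_dim[OF B(2) B(4) B(3)] by simp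
  define C where "C = B - BK"
  have finC: "finite C" using finB by (simp add: C_def)
  have BC: "B = C \<union> BK" "C \<inter> BK = {}" using B(1) by (auto simp: C_def)
  have spanB: "lf.vs1.span B = V" using lf.vs1.span_subspace[OF B(2) B(4) V] .
  have CV: "lf.vs1.span C \<subseteq> V"
    using spanB lf.vs1.span_mono[of C B] by (auto simp: C_def)
  have key: "\<forall>c\<in>C. w c = 0" if w: "(\<Sum>c\<in>C. s1 (w c) c) \<in> lf.vs1.span BK" for w
  proof -
    obtain u where u: "(\<Sum>c\<in>C. s1 (w c) c) = (\<Sum>b\<in>BK. s1 (u b) b)"
      using w lf.vs1.span_finite[OF finBK] by auto
    define h where "h x = (if x \<in> C then w x else - u x)" for x
    have "(\<Sum>x\<in>B. s1 (h x) x) = (\<Sum>x\<in>C. s1 (h x) x) + (\<Sum>x\<in>BK. s1 (h x) x)"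
      unfolding BC(1) by (rule sum.union_disjoint) (use finC finBK BC(2) in auto)
    also have "(\<Sum>x\<in>C. s1 (h x) x) = (\<Sum>c\<in>C. s1 (w c) c)"
      by (rule sum.cong) (auto simp: h_def)
    also have "(\<Sum>x\<in>BK. s1 (h x) x) = - (\<Sum>b\<in>BK. s1 (u b) b)"
    proof -
      have "(\<Sum>x\<in>BK. s1 (h x) x) = (\<Sum>b\<in>BK. - s1 (u b) b)"
        using BC(2) by (intro sum.cong) (auto simp: h_def lf.vs1.scale_minus_left)
      then show ?thesis by (simp add: sum_negf)
    qed
    finally have "(\<Sum>x\<in>B. s1 (h x) x) = 0" using u by simp
    then have "\<forall>x\<in>B. h x = 0"
      using B(3) lf.vs1.dependent_finite[OF finB] by auto
    then show ?thesis unfolding BC(1) h_def by (metis UnI1)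
  qed
  have injspan: "inj_on f (lf.vs1.span C)"
    unfolding lf.inj_on_iff_eq_0[OF lf.vs1.subspace_span]
  proof (intro ballI impI)
    fix x assume x: "x \<in> lf.vs1.span C" and fx: "f x = 0"
    obtain w where xw: "x = (\<Sum>c\<in>C. s1 (w c) c)" using x lf.vs1.span_finite[OF finC] by auto
    have "x \<in> K" using x CV fx by (auto simp: K_def)
    then have "\<forall>c\<in>C. w c = 0" using key[of w] xw BK(3) by auto
    then show "x = 0" using xw by simp
  qed
  have indC: "lf.vs1.independent C" using lf.vs1.independent_mono[OF B(3)] by (auto simp: C_def)
  have indfC: "lf.vs2.independent (f ` C)"
    by (rule lf.independent_injective_image[OF indC injspan])
  have injC: "inj_on f C" using injspan lf.vs1.span_superset inj_on_subset by blast
  have fBK: "f ` BK \<subseteq> {0}" using BK(1) by (auto simp: K_def)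
  have "f ` V = lf.vs2.span (f ` B)" using lf.span_image[of B] spanB by simp
  also have "lf.vs2.span (f ` B) = lf.vs2.span (f ` C)"
  proof
    show "lf.vs2.span (f ` B) \<subseteq> lf.vs2.span (f ` C)"
    proof (rule lf.vs2.span_minimal)
      show "f ` B \<subseteq> lf.vs2.span (f ` C)"
        using fBK BC(1) lf.vs2.span_zero lf.vs2.span_base by fastforce
    qed simp
    show "lf.vs2.span (f ` C) \<subseteq> lf.vs2.span (f ` B)"
      by (rule lf.vs2.span_mono) (auto simp: C_def)
  qed
  finally have fV: "f ` V = lf.vs2.span (f ` C)" .
  have "lf.vs2.dim (f ` V) = card (f ` C)"
    using lf.vs2.dim_eq_card[of "f ` C" "f ` V"] indfC fV lf.vs2.span_span by simp
  also have "\<dots> = card C" using card_image[OF injC] .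
  finally have d2: "lf.vs2.dim (f ` V) = card C" .
  have "card B = card C + card BK" unfolding BC(1) using card_Un_disjoint finC finBK BC(2) by blast
  then show ?thesis using dimV d2 BK(4) by (simp add: K_def)
qed

lemma dim_ge_indep:
  assumes vs: "vector_space s" and GV: "G \<subseteq> V" and G: "module.independent s G"
    and W: "finite W" "V \<subseteq> module.span s W"
  shows "card G \<le> vector_space.dim s V"
proof -
  interpret v: vector_space s by (rule vs)
  obtain B where B: "B \<subseteq> V" "v.independent B" "V \<subseteq> v.span B" "card B = v.dim V"
    by (rule v.basis_exists)
  have "finite B" using v.independent_span_bound[OF W(1) B(2)] B(1) W(2) by blast
  moreover have "G \<subseteq> v.span B" using GV B(3) by blast
  ultimately show ?thesis using v.independent_span_bound[OF _ G, of B] B(4) by auto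
qed



lemma proj_eq_refl: "proj_eq u u"
  by (simp add: proj_eq_def mult.commute)

lemma proj_eq_sym: "proj_eq u v \<Longrightarrow> proj_eq v u"
  by (simp add: proj_eq_def mult.commute)

lemma proj_eq_trans:
  fixes u v w :: "'a::field \<times> 'a"
  assumes "proj_eq u v" "proj_eq v w" "v \<noteq> (0,0)"
  shows "proj_eq u w"
proof -
  obtain u0 u1 v0 v1 w0 w1 where uvw: "u = (u0,u1)" "v = (v0,v1)" "w = (w0,w1)" by fastforce
  have h1: "u0 * v1 = u1 * v0" and h2: "v0 * w1 = v1 * w0" using assms by (auto simp: proj_eq_def uvw)
  have "v0 * (u0 * w1 - u1 * w0) = u0 * (v0 * w1) - (u1 * v0) * w0" by (simp add: algebra_simps)
  also have "\<dots> = u0 * (v1 * w0) - (u0 * v1) * w0" using h1 h2 by simp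
  also have "\<dots> = 0" by (simp add: algebra_simps)
  finally have e0: "v0 * (u0 * w1 - u1 * w0) = 0" .
  have "v1 * (u0 * w1 - u1 * w0) = (u0 * v1) * w1 - u1 * (v1 * w0)" by (simp add: algebra_simps)
  also have "\<dots> = (u1 * v0) * w1 - u1 * (v0 * w1)" using h1 h2 by simp
  also have "\<dots> = 0" by (simp add: algebra_simps)
  finally have e1: "v1 * (u0 * w1 - u1 * w0) = 0" .
  from e0 e1 have "u0 * w1 - u1 * w0 = 0" using assms(3) uvw by auto
  then show ?thesis by (simp add: proj_eq_def uvw)
qed

lemma p1class_eq_iff:
  fixes u v :: "'a::field \<times> 'a"
  assumes "u \<noteq> (0,0)" "v \<noteq> (0,0)"
  shows "p1class u = p1class v \<longleftrightarrow> proj_eq u v"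
proof
  assume "p1class u = p1class v"
  moreover have "u \<in> p1class u" using assms by (simp add: p1class_def proj_eq_refl)
  ultimately show "proj_eq u v" by (simp add: p1class_def)
next
  assume h: "proj_eq u v"
  show "p1class u = p1class v"
    unfolding p1class_def using h assms proj_eq_trans proj_eq_sym by blast
qed

lemma proj_eq_scalar:
  fixes u v :: "'a::field \<times> 'a"
  assumes "proj_eq u v" "v \<noteq> (0,0)"
  shows "\<exists>l. u = (l * fst v, l * snd v)"
proof (cases "fst v = 0")
  case True
  then have "snd v \<noteq> 0" using assms(2) by (cases v) auto
  then show ?thesis using assms True
    by (intro exI[of _ "snd u / snd v"]) (cases u, cases v, auto simp: proj_eq_def field_simps)
next
  case False
  then show ?thesis using assms
    by (intro exI[of _ "fst u / fst v"]) (cases u, cases v, auto simp: proj_eq_def field_simps)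
qed

definition fib :: "'a::field pt3 set \<Rightarrow> 'a pt3 \<Rightarrow> 'a pt3 set" where
  "fib X P = {Q \<in> X. proj_eq (fst Q) (fst P) \<and> proj_eq (fst (snd Q)) (fst (snd P))}"

lemma valid_pt_D: "valid_pt P \<Longrightarrow> fst P \<noteq> (0,0) \<and> fst (snd P) \<noteq> (0,0) \<and> snd (snd P) \<noteq> (0,0)"
  by (cases P) (auto simp: valid_pt_def)

lemma fib_self: "P \<in> X \<Longrightarrow> P \<in> fib X P"
  by (simp add: fib_def proj_eq_refl)

lemma fib_sub: "fib X P \<subseteq> X" by (auto simp: fib_def)

lemma fib_eq:
  assumes "point_set X" "Q \<in> fib X P" "P \<in> X"
  shows "fib X Q = fib X P"
proof -
  have v: "valid_pt P" "valid_pt Q" using assms by (auto simp: point_set_def fib_def)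
  have q: "proj_eq (fst Q) (fst P)" "proj_eq (fst (snd Q)) (fst (snd P))" using assms(2) by (auto simp: fib_def)
  show ?thesis unfolding fib_def using q v valid_pt_D proj_eq_trans proj_eq_sym by blast
qed

lemma fib_disj:
  assumes "point_set X" "P \<in> X" "Q \<in> X" "fib X P \<noteq> fib X Q"
  shows "fib X P \<inter> fib X Q = {}"
  using fib_eq[OF assms(1) _ assms(2)] fib_eq[OF assms(1) _ assms(3)] assms(4) by blast

lemma fib_z_distinct:
  assumes "point_set X" "Q \<in> fib X P" "P \<in> X" "Q \<noteq> P"
  shows "\<not> proj_eq (snd (snd Q)) (snd (snd P))"
  using assms by (auto simp: point_set_def fib_def same_point_def)



definition sF :: "'a::field \<Rightarrow> ('p \<Rightarrow> 'a) \<Rightarrow> ('p \<Rightarrow> 'a)" where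
  "sF c g = (\<lambda>x. c * g x)"

lemma vsF: "vector_space (sF :: 'a::field \<Rightarrow> ('p \<Rightarrow> 'a) \<Rightarrow> _)"
  by unfold_locales (auto simp: sF_def algebra_simps)

lemma sum_fun_app: "(sum f A) x = (\<Sum>a\<in>A. f a x)"
  by (induct A rule: infinite_finite_induct) auto

definition evX :: "'a::field pt3 set \<Rightarrow> 'a mpoly6 \<Rightarrow> ('a pt3 \<Rightarrow> 'a)" where
  "evX X F = (\<lambda>P. if P \<in> X then ev P F else 0)"

lemma lin_evX: "Vector_Spaces.linear scaleR6 sF (evX X)"
  unfolding Vector_Spaces.linear_def module_hom_def module_hom_axioms_def
  using vs6 vsF
  by (auto simp: module_iff_vector_space evX_def ev_add scaleR6_Const ev_mult ev_Const sF_def fun_eq_iff)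

lemma mv_scale:
  assumes "mdeg m = (i,j,k)"
  shows "mv ((l*a0, l*a1), (u*b0, u*b1), c) m = l^i * u^j * mv ((a0,a1),(b0,b1),c) m"
proof -
  have "i = Poly_Mapping.lookup m X0 + Poly_Mapping.lookup m X1" "j = Poly_Mapping.lookup m Y0 + Poly_Mapping.lookup m Y1"
    using assms by (auto simp: mdeg_def)
  then show ?thesis by (simp add: mv_def power_mult_distrib power_add algebra_simps)
qed

lemma ev_scale:
  assumes "F \<in> Rdeg i j k"
  shows "ev ((l*a0, l*a1), (u*b0, u*b1), c) F = l^i * u^j * ev ((a0,a1),(b0,b1),c) F"
  unfolding ev_def sum_distrib_left
  by (rule sum.cong) (use assms in \<open>auto simp: Rdeg_def mv_scale\<close>)

definition xyv :: "'a::comm_ring_1 pt3 \<Rightarrow> (var \<Rightarrow>\<^sub>0 nat) \<Rightarrow> 'a" where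
 "xyv P m = fst (fst P) ^ Poly_Mapping.lookup m X0 * snd (fst P) ^ Poly_Mapping.lookup m X1
   * fst (fst (snd P)) ^ Poly_Mapping.lookup m Y0 * snd (fst (snd P)) ^ Poly_Mapping.lookup m Y1"

definition zcoef :: "'a::comm_ring_1 pt3 \<Rightarrow> 'a mpoly6 \<Rightarrow> nat \<Rightarrow> 'a" where
  "zcoef P F e = (\<Sum>m\<in>{m\<in>Poly_Mapping.keys F. Poly_Mapping.lookup m Z0 = e}. Poly_Mapping.lookup F m * xyv P m)"

lemma ev_zexpand:
  assumes F: "F \<in> Rdeg i j k"
  shows "ev P F = (\<Sum>e\<in>{..k}. zcoef P F e * fst (snd (snd P)) ^ e * snd (snd (snd P)) ^ (k - e))"
proof -
  have "ev P F = (\<Sum>e\<in>{..k}. \<Sum>m\<in>{m\<in>Poly_Mapping.keys F. Poly_Mapping.lookup m Z0 = e}. Poly_Mapping.lookup F m * mv P m)"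
    unfolding ev_def
    by (rule sum.group[symmetric]) (use F in \<open>auto simp: Rdeg_def mdeg_def\<close>)
  also have "\<dots> = (\<Sum>e\<in>{..k}. zcoef P F e * fst (snd (snd P)) ^ e * snd (snd (snd P)) ^ (k - e))"
    unfolding zcoef_def sum_distrib_right
  proof (intro sum.cong refl)
    fix e m assume "m \<in> {m\<in>Poly_Mapping.keys F. Poly_Mapping.lookup m Z0 = e}"
    then have "Poly_Mapping.lookup m Z0 = e" "Poly_Mapping.lookup m Z1 = k - e"
      using F by (auto simp: Rdeg_def mdeg_def)
    then show "Poly_Mapping.lookup F m * mv P m = Poly_Mapping.lookup F m * xyv P m * fst (snd (snd P)) ^ e * snd (snd (snd P)) ^ (k - e)"
      by (simp add: mv_def xyv_def algebra_simps)
  qed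
  finally show ?thesis .
qed

lemma ker_ideal:
  assumes X: "point_set X"
  shows "Rdeg i j k \<inter> {F. evX X F = 0} = ideal_X X \<inter> Rdeg i j k"
proof -
  have "F \<in> ideal_pt P \<longleftrightarrow> ev P F = 0" if "P \<in> X" "F \<in> Rdeg i j k" for P F
  proof -
    obtain a0 a1 b0 b1 c0 c1 where P: "P = ((a0,a1),(b0,b1),(c0,c1))" by (metis prod.exhaust)
    have "valid_pt P" using X that by (auto simp: point_set_def)
    then show ?thesis using vanish_ideal[of a0 a1 b0 b1 c0 c1 F i j k] ev_ideal_pt[of F P] that
      by (auto simp: P valid_pt_def)
  qed
  then show ?thesis by (auto simp: ideal_X_def evX_def fun_eq_iff)
qed



definition rep :: "('a \<times> 'a) set \<Rightarrow> 'a \<times> 'a" where "rep A = (SOME v. v \<in> A)"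

definition Lx :: "'a::comm_ring_1 \<times> 'a \<Rightarrow> 'a mpoly6" where "Lx u = Const (snd u) * Var X0 - Const (fst u) * Var X1"
definition Ly :: "'a::comm_ring_1 \<times> 'a \<Rightarrow> 'a mpoly6" where "Ly u = Const (snd u) * Var Y0 - Const (fst u) * Var Y1"
definition Lz :: "'a::comm_ring_1 \<times> 'a \<Rightarrow> 'a mpoly6" where "Lz u = Const (snd u) * Var Z0 - Const (fst u) * Var Z1"

lemma ev_Lx: "ev Q (Lx u) = 0 \<longleftrightarrow> proj_eq (fst Q) u"
  by (simp add: Lx_def ev_diff ev_mult ev_Const ev_Var proj_eq_def algebra_simps)
lemma ev_Ly: "ev Q (Ly u) = 0 \<longleftrightarrow> proj_eq (fst (snd Q)) u"
  by (simp add: Ly_def ev_diff ev_mult ev_Const ev_Var proj_eq_def algebra_simps)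
lemma ev_Lz: "ev Q (Lz u) = 0 \<longleftrightarrow> proj_eq (snd (snd Q)) u"
  by (simp add: Lz_def ev_diff ev_mult ev_Const ev_Var proj_eq_def algebra_simps)

lemma Rdeg_Lx: "Lx u \<in> Rdeg 1 0 0"
  unfolding Lx_def by (intro Rdeg_diff Rdeg_scale Rdeg_Var)
lemma Rdeg_Ly: "Ly u \<in> Rdeg 0 1 0"
  unfolding Ly_def by (intro Rdeg_diff Rdeg_scale Rdeg_Var)
lemma Rdeg_Lz: "Lz u \<in> Rdeg 0 0 1"
  unfolding Lz_def by (intro Rdeg_diff Rdeg_scale Rdeg_Var)

lemma rep_class:
  fixes v :: "'a::field \<times> 'a"
  assumes "v \<noteq> (0,0)"
  shows "rep (p1class v) \<noteq> (0,0) \<and> p1class (rep (p1class v)) = p1class v"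
proof -
  have "v \<in> p1class v" using assms by (simp add: p1class_def proj_eq_refl)
  then have "rep (p1class v) \<in> p1class v" unfolding rep_def by (rule someI)
  then have "rep (p1class v) \<noteq> (0,0)" "proj_eq (rep (p1class v)) v" by (auto simp: p1class_def)
  then show ?thesis using p1class_eq_iff assms by blast
qed

definition C1 :: "'a::field pt3 set \<Rightarrow> ('a \<times> 'a) set set" where "C1 X = (\<lambda>Q. p1class (fst Q)) ` X"
definition C2 :: "'a::field pt3 set \<Rightarrow> ('a \<times> 'a) set set" where "C2 X = (\<lambda>Q. p1class (fst (snd Q))) ` X"

definition ellx :: "'a::field pt3 set \<Rightarrow> 'a pt3 \<Rightarrow> 'a mpoly6" where
  "ellx X P = (\<Prod>A\<in>C1 X - {p1class (fst P)}. Lx (rep A))"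
definition elly :: "'a::field pt3 set \<Rightarrow> 'a pt3 \<Rightarrow> 'a mpoly6" where
  "elly X P = (\<Prod>A\<in>C2 X - {p1class (fst (snd P))}. Ly (rep A))"

lemma Rdeg_cong: "F \<in> Rdeg i j k \<Longrightarrow> i = i' \<Longrightarrow> j = j' \<Longrightarrow> k = k' \<Longrightarrow> F \<in> Rdeg i' j' k'"
  by simp

lemma ellx_Rdeg: "finite X \<Longrightarrow> P \<in> X \<Longrightarrow> ellx X P \<in> Rdeg (t1 X - 1) 0 0"
  unfolding ellx_def
  by (rule Rdeg_cong[OF Rdeg_prod[OF Rdeg_Lx]]) (auto simp: C1_def t1_def)
lemma elly_Rdeg: "finite X \<Longrightarrow> P \<in> X \<Longrightarrow> elly X P \<in> Rdeg 0 (t2 X - 1) 0"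
  unfolding elly_def
  by (rule Rdeg_cong[OF Rdeg_prod[OF Rdeg_Ly]]) (auto simp: C2_def t2_def)

lemma ellx_ev:
  assumes X: "point_set X" and P: "P \<in> X" and Q: "Q \<in> X"
  shows "ev Q (ellx X P) = 0 \<longleftrightarrow> p1class (fst Q) \<noteq> p1class (fst P)"
proof -
  have fin: "finite (C1 X)" using X by (simp add: C1_def point_set_def)
  have nz: "\<And>R. R \<in> X \<Longrightarrow> fst R \<noteq> (0,0)" using X by (auto simp: point_set_def dest: valid_pt_D)
  have "ev Q (ellx X P) = 0 \<longleftrightarrow> (\<exists>A\<in>C1 X - {p1class (fst P)}. proj_eq (fst Q) (rep A))"
    unfolding ellx_def ev_prod using fin by (simp add: ev_Lx)
  also have "\<dots> \<longleftrightarrow> (\<exists>A\<in>C1 X - {p1class (fst P)}. p1class (fst Q) = A)"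
  proof (intro bex_cong refl)
    fix A assume "A \<in> C1 X - {p1class (fst P)}"
    then obtain R where R: "R \<in> X" "A = p1class (fst R)" unfolding C1_def by blast
    show "proj_eq (fst Q) (rep A) \<longleftrightarrow> p1class (fst Q) = A"
      using rep_class[OF nz[OF R(1)]] p1class_eq_iff[OF nz[OF Q], of "rep A"] R by auto
  qed
  also have "\<dots> \<longleftrightarrow> p1class (fst Q) \<noteq> p1class (fst P)" using Q by (auto simp: C1_def)
  finally show ?thesis .
qed

lemma elly_ev:
  assumes X: "point_set X" and P: "P \<in> X" and Q: "Q \<in> X"
  shows "ev Q (elly X P) = 0 \<longleftrightarrow> p1class (fst (snd Q)) \<noteq> p1class (fst (snd P))"
proof -
  have fin: "finite (C2 X)" using X by (simp add: C2_def point_set_def)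
  have nz: "\<And>R. R \<in> X \<Longrightarrow> fst (snd R) \<noteq> (0,0)" using X by (auto simp: point_set_def dest: valid_pt_D)
  have "ev Q (elly X P) = 0 \<longleftrightarrow> (\<exists>A\<in>C2 X - {p1class (fst (snd P))}. proj_eq (fst (snd Q)) (rep A))"
    unfolding elly_def ev_prod using fin by (simp add: ev_Ly)
  also have "\<dots> \<longleftrightarrow> (\<exists>A\<in>C2 X - {p1class (fst (snd P))}. p1class (fst (snd Q)) = A)"
  proof (intro bex_cong refl)
    fix A assume "A \<in> C2 X - {p1class (fst (snd P))}"
    then obtain R where R: "R \<in> X" "A = p1class (fst (snd R))" unfolding C2_def by blast
    show "proj_eq (fst (snd Q)) (rep A) \<longleftrightarrow> p1class (fst (snd Q)) = A"
      using rep_class[OF nz[OF R(1)]] p1class_eq_iff[OF nz[OF Q], of "rep A"] R by auto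
  qed
  also have "\<dots> \<longleftrightarrow> p1class (fst (snd Q)) \<noteq> p1class (fst (snd P))" using Q by (auto simp: C2_def)
  finally show ?thesis .
qed



definition Sel :: "nat \<Rightarrow> 'p set \<Rightarrow> 'p set" where
  "Sel k F = (SOME S. S \<subseteq> F \<and> card S = min (k+1) (card F))"

lemma Sel: assumes "finite F" shows "Sel k F \<subseteq> F" "card (Sel k F) = min (k+1) (card F)" "finite (Sel k F)"
proof -
  obtain T where "T \<subseteq> F" "card T = min (k+1) (card F)"
    using obtain_subset_with_card_n[of "min (k+1) (card F)" F] by auto
  then have "\<exists>S. S \<subseteq> F \<and> card S = min (k+1) (card F)" by blast
  then have "Sel k F \<subseteq> F \<and> card (Sel k F) = min (k+1) (card F)" unfolding Sel_def by (rule someI_ex)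
  then show "Sel k F \<subseteq> F" "card (Sel k F) = min (k+1) (card F)" by auto
  then show "finite (Sel k F)" using assms finite_subset by blast
qed

definition Wz :: "'a::field pt3 \<Rightarrow> 'a mpoly6" where
  "Wz P = (if fst (snd (snd P)) \<noteq> 0 then Var Z0 else Var Z1)"

definition zp :: "'a::field pt3 set \<Rightarrow> nat \<Rightarrow> 'a pt3 \<Rightarrow> 'a mpoly6" where
  "zp X k P = (\<Prod>Q\<in>Sel k (fib X P) - {P}. Lz (snd (snd Q))) * Wz P ^ (k + 1 - card (Sel k (fib X P)))"

definition Sall :: "'a::field pt3 set \<Rightarrow> nat \<Rightarrow> 'a pt3 set" where
  "Sall X k = {P \<in> X. P \<in> Sel k (fib X P)}"

definition Fp :: "'a::field pt3 set \<Rightarrow> nat \<Rightarrow> 'a pt3 \<Rightarrow> 'a mpoly6" where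
  "Fp X k P = ellx X P * elly X P * zp X k P"

lemma Wz_Rdeg: "Wz (P :: 'a::field pt3) \<in> Rdeg 0 0 1"
proof -
  have "Var Z0 \<in> (Rdeg 0 0 1 :: 'a mpoly6 set)" "Var Z1 \<in> (Rdeg 0 0 1 :: 'a mpoly6 set)" by (rule Rdeg_Var)+
  then show ?thesis by (simp add: Wz_def)
qed

lemma fib_finite: "point_set X \<Longrightarrow> finite (fib X P)"
  using fib_sub[of X P] by (auto simp: point_set_def intro: finite_subset)

lemma zp_Rdeg:
  assumes X: "point_set X" and P: "P \<in> Sall X k"
  shows "zp X k P \<in> Rdeg 0 0 k"
proof -
  let ?S = "Sel k (fib X P)"
  have fS: "finite ?S" "card ?S = min (k+1) (card (fib X P))" using Sel[OF fib_finite[OF X]] by auto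
  have PS: "P \<in> ?S" using P by (simp add: Sall_def)
  have c: "1 \<le> card ?S" "card ?S \<le> k + 1"
    using fS PS card_gt_0_iff[of ?S] by auto
  have "zp X k P \<in> Rdeg (card (?S - {P}) * 0 + (k + 1 - card ?S) * 0) (card (?S - {P}) * 0 + (k + 1 - card ?S) * 0)
      (card (?S - {P}) * 1 + (k + 1 - card ?S) * 1)"
    unfolding zp_def by (intro Rdeg_mult Rdeg_prod Rdeg_Lz Rdeg_power Wz_Rdeg)
  moreover have "card (?S - {P}) * 1 + (k + 1 - card ?S) * 1 = k" using c PS fS by simp
  ultimately show ?thesis by simp
qed

lemma Sall_sub: "Sall X k \<subseteq> X" by (auto simp: Sall_def)

lemma Fp_Rdeg:
  assumes X: "point_set X" and P: "P \<in> Sall X k"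
  shows "Fp X k P \<in> Rdeg (t1 X - 1) (t2 X - 1) k"
proof -
  have PX: "P \<in> X" using P by (simp add: Sall_def)
  have fX: "finite X" using X by (simp add: point_set_def)
  show ?thesis unfolding Fp_def
    using Rdeg_mult[OF Rdeg_mult[OF ellx_Rdeg[OF fX PX] elly_Rdeg[OF fX PX]] zp_Rdeg[OF X P]] by simp
qed

lemma Wz_ev: "valid_pt P \<Longrightarrow> ev P (Wz P) \<noteq> 0"
  by (cases P) (auto simp: Wz_def ev_Var valid_pt_def)

lemma Fp_ev:
  assumes X: "point_set X" and P: "P \<in> Sall X k" and Q: "Q \<in> Sall X k"
  shows "ev Q (Fp X k P) = 0 \<longleftrightarrow> Q \<noteq> P"
proof -
  have PX: "P \<in> X" and QX: "Q \<in> X" using P Q by (auto simp: Sall_def)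
  have vP: "valid_pt P" and vQ: "valid_pt Q" using X PX QX by (auto simp: point_set_def)
  let ?S = "Sel k (fib X P)"
  have fS: "finite ?S" "?S \<subseteq> fib X P" using Sel[OF fib_finite[OF X]] by auto
  show ?thesis
  proof (cases "Q = P")
    case True
    have "ev P (ellx X P) \<noteq> 0" using ellx_ev[OF X PX PX] by simp
    moreover have "ev P (elly X P) \<noteq> 0" using elly_ev[OF X PX PX] by simp
    moreover have "ev P (Lz (snd (snd R))) \<noteq> 0" if "R \<in> ?S - {P}" for R
    proof -
      have "R \<in> fib X P" "R \<noteq> P" using that fS by auto
      then have "\<not> proj_eq (snd (snd R)) (snd (snd P))" using fib_z_distinct[OF X _ PX] by blast
      then show ?thesis using proj_eq_sym[of "snd (snd P)" "snd (snd R)"] by (auto simp: ev_Lz)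
    qed
    then have "ev P (\<Prod>R\<in>?S - {P}. Lz (snd (snd R))) \<noteq> 0"
      using fS by (simp add: ev_prod)
    moreover have "ev P (Wz P ^ n) \<noteq> 0" for n using Wz_ev[OF vP] by (simp add: ev_power)
    ultimately show ?thesis using True by (simp add: Fp_def zp_def ev_mult)
  next
    case False
    have "ev Q (Fp X k P) = 0"
    proof (cases "p1class (fst Q) \<noteq> p1class (fst P)")
      case True then show ?thesis using ellx_ev[OF X PX QX] by (simp add: Fp_def ev_mult)
    next
      case c1: False
      show ?thesis
      proof (cases "p1class (fst (snd Q)) \<noteq> p1class (fst (snd P))")
        case True then show ?thesis using elly_ev[OF X PX QX] by (simp add: Fp_def ev_mult)
      next
        case c2: False
        have "proj_eq (fst Q) (fst P)" using c1 p1class_eq_iff[of "fst Q" "fst P"] valid_pt_D[OF vP] valid_pt_D[OF vQ] by simp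
        moreover have "proj_eq (fst (snd Q)) (fst (snd P))"
          using c2 p1class_eq_iff[of "fst (snd Q)" "fst (snd P)"] valid_pt_D[OF vP] valid_pt_D[OF vQ] by simp
        ultimately have "Q \<in> fib X P" using QX by (auto simp: fib_def)
        then have "fib X Q = fib X P" using fib_eq[OF X _ PX] by blast
        then have "Q \<in> ?S - {P}" using Q False by (auto simp: Sall_def)
        moreover have "ev Q (Lz (snd (snd Q))) = 0" by (simp add: ev_Lz proj_eq_refl)
        ultimately have "ev Q (\<Prod>R\<in>?S - {P}. Lz (snd (snd R))) = 0"
          using fS by (auto simp: ev_prod)
        then show ?thesis by (simp add: Fp_def zp_def ev_mult)
      qed
    qed
    then show ?thesis using False by simp
  qed
qed

lemma indep_delta:
  assumes fS: "finite S"
    and d: "\<And>P. P \<in> S \<Longrightarrow> g P P \<noteq> (0::'a::field)"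
    and o: "\<And>P Q. P \<in> S \<Longrightarrow> Q \<in> S \<Longrightarrow> Q \<noteq> P \<Longrightarrow> g P Q = 0"
  shows "inj_on g S" "module.independent (sF :: 'a \<Rightarrow> _) (g ` S)"
proof -
  interpret v: vector_space "sF :: 'a \<Rightarrow> ('p \<Rightarrow> 'a) \<Rightarrow> _" by (rule vsF)
  show inj: "inj_on g S"
  proof (rule inj_onI)
    fix P Q assume "P \<in> S" "Q \<in> S" "g P = g Q"
    then show "P = Q" using d o by (metis)
  qed
  show "v.independent (g ` S)"
    unfolding v.dependent_finite[OF finite_imageI[OF fS]]
  proof clarify
    fix u P assume P: "P \<in> S" and u: "u (g P) \<noteq> 0" and sum0: "(\<Sum>v\<in>g ` S. sF (u v) v) = 0"
    have "(\<Sum>v\<in>g ` S. sF (u v) v) P = (\<Sum>v\<in>g ` S. u v * v P)"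
      by (simp add: sum_fun_app sF_def)
    also have "\<dots> = u (g P) * g P P + (\<Sum>v\<in>g ` S - {g P}. u v * v P)"
      using P fS by (simp add: sum.remove[of "g ` S" "g P"])
    also have "(\<Sum>v\<in>g ` S - {g P}. u v * v P) = 0"
    proof (rule sum.neutral, rule ballI)
      fix v assume "v \<in> g ` S - {g P}"
      then obtain Q where "Q \<in> S" "g Q \<noteq> g P" "v = g Q" by auto
      then show "u v * v P = 0" using o[of Q P] P by auto
    qed
    finally have "u (g P) * g P P = 0" using sum0 by simp
    then show False using u d[OF P] by simp
  qed
qed



interpretation vF: vector_space "sF :: 'a::field \<Rightarrow> ('p \<Rightarrow> 'a) \<Rightarrow> ('p \<Rightarrow> 'a)"
  by (rule vsF)

definition Fs :: "'a::field pt3 set \<Rightarrow> 'a pt3 set set" where "Fs X = fib X ` X"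

lemma Fs_mem:
  assumes X: "point_set X" and Phi: "Phi \<in> Fs X" and x: "x \<in> X"
  shows "x \<in> Phi \<longleftrightarrow> Phi = fib X x"
proof -
  obtain Q where Q: "Q \<in> X" "Phi = fib X Q" using Phi by (auto simp: Fs_def)
  show ?thesis using fib_eq[OF X _ Q(1)] fib_self[OF x] Q by blast
qed

lemma Fs_finite: "point_set X \<Longrightarrow> finite (Fs X)"
  by (simp add: Fs_def point_set_def)

lemma Sall_UN:
  assumes X: "point_set X"
  shows "Sall X k = (\<Union>Phi\<in>Fs X. Sel k Phi)"
proof
  show "Sall X k \<subseteq> (\<Union>Phi\<in>Fs X. Sel k Phi)" by (auto simp: Sall_def Fs_def)
  show "(\<Union>Phi\<in>Fs X. Sel k Phi) \<subseteq> Sall X k"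
  proof clarify
    fix P Phi assume Phi: "Phi \<in> Fs X" and P: "P \<in> Sel k Phi"
    obtain Q where Q: "Q \<in> X" "Phi = fib X Q" using Phi by (auto simp: Fs_def)
    have "P \<in> fib X Q" using P Sel(1)[OF fib_finite[OF X], of k Q] Q by blast
    then have "P \<in> X" "fib X P = fib X Q" using fib_eq[OF X _ Q(1)] fib_sub[of X Q] by blast+
    then show "P \<in> Sall X k" using P Q by (simp add: Sall_def)
  qed
qed

lemma card_Sall:
  assumes X: "point_set X"
  shows "card (Sall X k) = (\<Sum>Phi\<in>Fs X. min (k+1) (card Phi))"
proof -
  have "card (\<Union>Phi\<in>Fs X. Sel k Phi) = (\<Sum>Phi\<in>Fs X. card (Sel k Phi))"
  proof (rule card_UN_disjoint)
    show "finite (Fs X)" using Fs_finite[OF X] .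
    show "\<forall>Phi\<in>Fs X. finite (Sel k Phi)" using Sel(3)[OF fib_finite[OF X]] by (auto simp: Fs_def)
    show "\<forall>Phi1\<in>Fs X. \<forall>Phi2\<in>Fs X. Phi1 \<noteq> Phi2 \<longrightarrow> Sel k Phi1 \<inter> Sel k Phi2 = {}"
    proof (intro ballI impI)
      fix Phi1 Phi2 assume "Phi1 \<in> Fs X" "Phi2 \<in> Fs X" "Phi1 \<noteq> Phi2"
      then obtain P Q where PQ: "P \<in> X" "Q \<in> X" "Phi1 = fib X P" "Phi2 = fib X Q" "fib X P \<noteq> fib X Q"
        unfolding Fs_def by blast
      then show "Sel k Phi1 \<inter> Sel k Phi2 = {}"
        using fib_disj[OF X PQ(1,2,5)] Sel(1)[OF fib_finite[OF X], of k P] Sel(1)[OF fib_finite[OF X], of k Q] by blast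
    qed
  qed
  also have "\<dots> = (\<Sum>Phi\<in>Fs X. min (k+1) (card Phi))"
    by (rule sum.cong) (auto simp: Fs_def Sel(2)[OF fib_finite[OF X]])
  finally show ?thesis using Sall_UN[OF X] by simp
qed

lemma img_span_finite:
  "evX X ` (Rdeg i j k :: 'a::field mpoly6 set) \<subseteq> vF.span (evX X ` mon ` {m. mdeg m = (i,j,k)})"
proof -
  interpret lf: Vector_Spaces.linear scaleR6 sF "evX X" by (rule lin_evX)
  show ?thesis using Rdeg_span[of i j k] lf.span_image
    by (metis image_mono)
qed

lemma img_lower:
  assumes X: "point_set X"
  shows "card (Sall X k) \<le> vector_space.dim sF (evX X ` (Rdeg (t1 X - 1) (t2 X - 1) k :: 'a::field mpoly6 set))"
proof -
  let ?g = "\<lambda>P. evX X (Fp X k P)"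
  have fS: "finite (Sall X k)" using X Sall_sub[of X k] by (auto simp: point_set_def intro: finite_subset)
  have d: "?g P P \<noteq> 0" if "P \<in> Sall X k" for P
    using Fp_ev[OF X that that] that Sall_sub by (auto simp: evX_def)
  have o: "?g P Q = 0" if "P \<in> Sall X k" "Q \<in> Sall X k" "Q \<noteq> P" for P Q
    using Fp_ev[OF X that(1,2)] that Sall_sub by (auto simp: evX_def)
  have inj: "inj_on ?g (Sall X k)" and ind: "vF.independent (?g ` Sall X k)"
    using indep_delta[of "Sall X k" ?g, OF fS d o] by auto
  have sub: "?g ` Sall X k \<subseteq> evX X ` Rdeg (t1 X - 1) (t2 X - 1) k"
    using Fp_Rdeg[OF X] by auto
  have "card (?g ` Sall X k) \<le> vF.dim (evX X ` Rdeg (t1 X - 1) (t2 X - 1) k)"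
    by (rule dim_ge_indep[OF vsF sub ind _ img_span_finite]) (simp add: finite_mdeg)
  then show ?thesis using card_image[OF inj] by simp
qed



definition base :: "'p set \<Rightarrow> 'p" where "base Phi = (SOME P. P \<in> Phi)"
definition lamv :: "'a::field pt3 \<Rightarrow> 'a pt3 \<Rightarrow> 'a" where
  "lamv B Q = (SOME l. fst Q = (l * fst (fst B), l * snd (fst B)))"
definition muv :: "'a::field pt3 \<Rightarrow> 'a pt3 \<Rightarrow> 'a" where
  "muv B Q = (SOME l. fst (snd Q) = (l * fst (fst (snd B)), l * snd (fst (snd B))))"
definition hfun :: "'a::field pt3 set \<Rightarrow> nat \<Rightarrow> nat \<Rightarrow> nat \<Rightarrow> nat \<Rightarrow> 'a pt3 \<Rightarrow> 'a" where
  "hfun Phi i j k e = (\<lambda>Q. if Q \<in> Phi then lamv (base Phi) Q ^ i * muv (base Phi) Q ^ j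
      * fst (snd (snd Q)) ^ e * snd (snd (snd Q)) ^ (k - e) else 0)"
definition delta :: "'p \<Rightarrow> 'p \<Rightarrow> 'a::field" where "delta Q = (\<lambda>x. if x = Q then 1 else 0)"
definition Wf :: "'a::field pt3 set \<Rightarrow> nat \<Rightarrow> nat \<Rightarrow> nat \<Rightarrow> ('a pt3 \<Rightarrow> 'a) set" where
  "Wf Phi i j k = (if card Phi \<le> k + 1 then delta ` Phi else hfun Phi i j k ` {..k})"
definition Wall :: "'a::field pt3 set \<Rightarrow> nat \<Rightarrow> nat \<Rightarrow> nat \<Rightarrow> ('a pt3 \<Rightarrow> 'a) set" where
  "Wall X i j k = (\<Union>Phi\<in>Fs X. Wf Phi i j k)"

lemma rst_span:
  assumes X: "point_set X" and Phi: "Phi \<in> Fs X" and F: "F \<in> Rdeg i j k"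
  shows "(\<lambda>x. if x \<in> Phi then ev x F else 0) \<in> vF.span (Wf Phi i j k)"
proof -
  obtain Q0 where Q0: "Q0 \<in> X" "Phi = fib X Q0" using Phi by (auto simp: Fs_def)
  have finPhi: "finite Phi" using fib_finite[OF X] Q0 by simp
  show ?thesis
  proof (cases "card Phi \<le> k + 1")
    case True
    have "(\<lambda>x. if x \<in> Phi then ev x F else 0) = (\<Sum>Q\<in>Phi. sF (ev Q F) (delta Q))"
    proof
      fix x
      have "(\<Sum>Q\<in>Phi. sF (ev Q F) (delta Q)) x = (\<Sum>Q\<in>Phi. if x = Q then ev Q F else 0)"
        by (simp add: sum_fun_app sF_def delta_def if_distrib cong: if_cong)
      also have "\<dots> = (if x \<in> Phi then ev x F else 0)" using finPhi by (simp add: sum.delta)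
      finally show "(if x \<in> Phi then ev x F else 0) = (\<Sum>Q\<in>Phi. sF (ev Q F) (delta Q)) x" by simp
    qed
    also have "\<dots> \<in> vF.span (Wf Phi i j k)"
      using True by (intro vF.span_sum vF.span_scale vF.span_base) (simp add: Wf_def)
    finally show ?thesis .
  next
    case False
    have Phine: "Phi \<noteq> {}" using fib_self[OF Q0(1)] Q0 by auto
    define B where "B = base Phi"
    have BPhi: "B \<in> Phi" unfolding B_def base_def using Phine by (simp add: some_in_eq)
    obtain a0 a1 b0 b1 cB where Bc: "B = ((a0,a1),(b0,b1),cB)" by (metis prod.exhaust)
    have nzQ0: "fst Q0 \<noteq> (0,0)" "fst (snd Q0) \<noteq> (0,0)" using X Q0 by (auto simp: point_set_def dest: valid_pt_D)
    have repr: "x = ((lamv B x * a0, lamv B x * a1), (muv B x * b0, muv B x * b1), snd (snd x))"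
      if x: "x \<in> Phi" for x
    proof -
      have "proj_eq (fst x) (fst Q0)" "proj_eq (fst B) (fst Q0)"
        "proj_eq (fst (snd x)) (fst (snd Q0))" "proj_eq (fst (snd B)) (fst (snd Q0))"
        using x BPhi Q0 by (auto simp: fib_def)
      then have pe: "proj_eq (fst x) (fst B)" "proj_eq (fst (snd x)) (fst (snd B))"
        using proj_eq_trans proj_eq_sym nzQ0 by blast+
      have nzB: "fst B \<noteq> (0,0)" "fst (snd B) \<noteq> (0,0)"
        using X BPhi Q0 fib_sub[of X Q0] by (auto simp: point_set_def dest: valid_pt_D)
      have "\<exists>l. fst x = (l * fst (fst B), l * snd (fst B))" using proj_eq_scalar[OF pe(1) nzB(1)] .
      then have l: "fst x = (lamv B x * fst (fst B), lamv B x * snd (fst B))"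
        unfolding lamv_def by (rule someI_ex)
      have "\<exists>l. fst (snd x) = (l * fst (fst (snd B)), l * snd (fst (snd B)))" using proj_eq_scalar[OF pe(2) nzB(2)] .
      then have m: "fst (snd x) = (muv B x * fst (fst (snd B)), muv B x * snd (fst (snd B)))"
        unfolding muv_def by (rule someI_ex)
      show ?thesis using l m Bc by (metis fst_conv snd_conv prod.collapse)
    qed
    have "(\<lambda>x. if x \<in> Phi then ev x F else 0) = (\<Sum>e\<in>{..k}. sF (zcoef B F e) (hfun Phi i j k e))"
    proof
      fix x
      show "(if x \<in> Phi then ev x F else 0) = (\<Sum>e\<in>{..k}. sF (zcoef B F e) (hfun Phi i j k e)) x"
      proof (cases "x \<in> Phi")
        case True
        have "ev x F = ev ((lamv B x * a0, lamv B x * a1), (muv B x * b0, muv B x * b1), snd (snd x)) F"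
          using repr[OF True] by simp
        also have "\<dots> = lamv B x ^ i * muv B x ^ j * ev ((a0,a1),(b0,b1),snd (snd x)) F"
          by (rule ev_scale[OF F])
        also have "ev ((a0,a1),(b0,b1),snd (snd x)) F = (\<Sum>e\<in>{..k}. zcoef ((a0,a1),(b0,b1),snd (snd x)) F e
            * fst (snd (snd x)) ^ e * snd (snd (snd x)) ^ (k - e))"
          using ev_zexpand[OF F] by simp
        also have "zcoef ((a0,a1),(b0,b1),snd (snd x)) F = zcoef B F"
          by (simp add: Bc zcoef_def xyv_def fun_eq_iff)
        finally have "ev x F = (\<Sum>e\<in>{..k}. zcoef B F e * hfun Phi i j k e x)"
          using True by (simp add: hfun_def B_def sum_distrib_left algebra_simps)
        then show ?thesis using True by (simp add: sum_fun_app sF_def)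
      next
        case False
        then show ?thesis by (simp add: sum_fun_app sF_def hfun_def)
      qed
    qed
    also have "\<dots> \<in> vF.span (Wf Phi i j k)"
      using False by (intro vF.span_sum vF.span_scale vF.span_base) (simp add: Wf_def B_def)
    finally show ?thesis .
  qed
qed

lemma evX_decomp:
  assumes X: "point_set X"
  shows "evX X F = (\<Sum>Phi\<in>Fs X. (\<lambda>x. if x \<in> Phi then ev x F else 0))"
proof
  fix x
  show "evX X F x = (\<Sum>Phi\<in>Fs X. (\<lambda>x. if x \<in> Phi then ev x F else 0)) x"
  proof (cases "x \<in> X")
    case True
    have "(\<Sum>Phi\<in>Fs X. (\<lambda>x. if x \<in> Phi then ev x F else 0)) x = (\<Sum>Phi\<in>Fs X. if Phi = fib X x then ev x F else 0)"
      unfolding sum_fun_app by (rule sum.cong) (use Fs_mem[OF X _ True] in auto)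
    also have "\<dots> = ev x F" using Fs_finite[OF X] True by (simp add: Fs_def)
    finally show ?thesis using True by (simp add: evX_def)
  next
    case False
    have "x \<notin> Phi" if "Phi \<in> Fs X" for Phi using that False fib_sub[of X] unfolding Fs_def by blast
    then show ?thesis using False by (simp add: evX_def sum_fun_app)
  qed
qed

lemma img_sub_Wall:
  assumes X: "point_set X"
  shows "evX X ` Rdeg i j k \<subseteq> vF.span (Wall X i j k)"
proof clarify
  fix F :: "'a mpoly6" assume F: "F \<in> Rdeg i j k"
  show "evX X F \<in> vF.span (Wall X i j k)"
    unfolding evX_decomp[OF X]
  proof (rule vF.span_sum)
    fix Phi assume Phi: "Phi \<in> Fs X"
    have "Wf Phi i j k \<subseteq> Wall X i j k" using Phi by (auto simp: Wall_def)
    then show "(\<lambda>x. if x \<in> Phi then ev x F else 0) \<in> vF.span (Wall X i j k)"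
      using rst_span[OF X Phi F] vF.span_mono by blast
  qed
qed

lemma Wall_card:
  assumes X: "point_set X"
  shows "finite (Wall X i j k)" "card (Wall X i j k) \<le> (\<Sum>Phi\<in>Fs X. min (k+1) (card Phi))"
proof -
  have finPhi: "finite Phi" if "Phi \<in> Fs X" for Phi using that fib_finite[OF X] by (auto simp: Fs_def)
  show "finite (Wall X i j k)" unfolding Wall_def Wf_def using Fs_finite[OF X] finPhi by auto
  have "card (Wall X i j k) \<le> (\<Sum>Phi\<in>Fs X. card (Wf Phi i j k))"
    unfolding Wall_def by (rule card_UN_le[OF Fs_finite[OF X]])
  also have "\<dots> \<le> (\<Sum>Phi\<in>Fs X. min (k+1) (card Phi))"
  proof (rule sum_mono)
    fix Phi assume "Phi \<in> Fs X"
    then have "finite Phi" by (rule finPhi)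
    then show "card (Wf Phi i j k) \<le> min (k+1) (card Phi)"
      unfolding Wf_def using card_image_le[of Phi delta] card_image_le[of "{..k}" "hfun Phi i j k"]
      by auto
  qed
  finally show "card (Wall X i j k) \<le> (\<Sum>Phi\<in>Fs X. min (k+1) (card Phi))" .
qed

lemma img_upper:
  assumes X: "point_set X"
  shows "vector_space.dim sF (evX X ` (Rdeg i j k :: 'a::field mpoly6 set)) \<le> (\<Sum>Phi\<in>Fs X. min (k+1) (card Phi))"
  by (rule order_trans[OF vF.dim_le_card[OF img_sub_Wall[OF X] Wall_card(1)[OF X]] Wall_card(2)[OF X]])

lemma img_dim:
  assumes X: "point_set X"
  shows "vector_space.dim sF (evX X ` (Rdeg (t1 X - 1) (t2 X - 1) k :: 'a::field mpoly6 set)) = (\<Sum>Phi\<in>Fs X. min (k+1) (card Phi))"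
  by (rule antisym[OF img_upper[OF X]]) (use img_lower[OF X, of k] card_Sall[OF X, of k] in simp)



lemma orth_proj:
  fixes l a q :: "'a::field \<times> 'a"
  assumes l: "l \<noteq> (0,0)" and a: "a \<noteq> (0,0)" and la: "fst l * fst a + snd l * snd a = 0"
  shows "fst l * fst q + snd l * snd q = 0 \<longleftrightarrow> proj_eq q a"
proof -
  obtain l0 l1 a0 a1 q0 q1 where e: "l = (l0,l1)" "a = (a0,a1)" "q = (q0,q1)" by fastforce
  have la': "l0 * a0 + l1 * a1 = 0" using la e by simp
  have i1: "l0 * (q0 * a1 - q1 * a0) = a1 * (l0 * q0 + l1 * q1) - q1 * (l0 * a0 + l1 * a1)"
    by (simp add: algebra_simps)
  have i2: "l1 * (q0 * a1 - q1 * a0) = q0 * (l0 * a0 + l1 * a1) - a0 * (l0 * q0 + l1 * q1)"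
    by (simp add: algebra_simps)
  have i3: "a0 * (l0 * q0 + l1 * q1) = q0 * (l0 * a0 + l1 * a1) - l1 * (q0 * a1 - q1 * a0)"
    by (simp add: algebra_simps)
  have i4: "a1 * (l0 * q0 + l1 * q1) = q1 * (l0 * a0 + l1 * a1) + l0 * (q0 * a1 - q1 * a0)"
    by (simp add: algebra_simps)
  have l01: "l0 \<noteq> 0 \<or> l1 \<noteq> 0" using l e by simp
  have a01: "a0 \<noteq> 0 \<or> a1 \<noteq> 0" using a e by simp
  show ?thesis unfolding e proj_eq_def fst_conv snd_conv
  proof
    assume lq: "l0 * q0 + l1 * q1 = 0"
    have "l0 * (q0 * a1 - q1 * a0) = 0" "l1 * (q0 * a1 - q1 * a0) = 0"
      unfolding i1 i2 lq la' by simp_all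
    then have "q0 * a1 - q1 * a0 = 0" using l01 by auto
    then show "q0 * a1 = q1 * a0" by simp
  next
    assume qa: "q0 * a1 = q1 * a0"
    then have d: "q0 * a1 - q1 * a0 = 0" by simp
    have "a0 * (l0 * q0 + l1 * q1) = 0" "a1 * (l0 * q0 + l1 * q1) = 0"
      unfolding i3 i4 d la' by simp_all
    then show "l0 * q0 + l1 * q1 = 0" using a01 by auto
  qed
qed

definition lineP :: "'a::field pt3 \<Rightarrow> 'a pt3 set" where
  "lineP P = line110 (snd (fst P), - fst (fst P)) (snd (fst (snd P)), - fst (fst (snd P)))"

lemma line_through:
  fixes P :: "'a::field pt3"
  assumes l: "l \<noteq> (0,0)" "m \<noteq> (0,0)" and P: "P \<in> line110 l m"
  shows "line110 l m = {Q. valid_pt Q \<and> proj_eq (fst Q) (fst P) \<and> proj_eq (fst (snd Q)) (fst (snd P))}"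
proof -
  have vP: "valid_pt P" and la: "fst l * fst (fst P) + snd l * snd (fst P) = 0"
    and mb: "fst m * fst (fst (snd P)) + snd m * snd (fst (snd P)) = 0"
    using P by (auto simp: line110_def)
  show ?thesis unfolding line110_def
    using orth_proj[OF l(1) _ la] orth_proj[OF l(2) _ mb] valid_pt_D[OF vP] by auto
qed

lemma lineP_line:
  fixes P :: "'a::field pt3"
  assumes vP: "valid_pt P"
  shows "is_line110 (lineP P)" "P \<in> lineP P"
    "lineP P = {Q. valid_pt Q \<and> proj_eq (fst Q) (fst P) \<and> proj_eq (fst (snd Q)) (fst (snd P))}"
proof -
  have nz: "(snd (fst P), - fst (fst P)) \<noteq> (0,0)" "(snd (fst (snd P)), - fst (fst (snd P))) \<noteq> (0,0)"
    using valid_pt_D[OF vP] by (auto simp: prod_eq_iff)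
  show "is_line110 (lineP P)" unfolding is_line110_def lineP_def using nz by blast
  show PL: "P \<in> lineP P" using vP by (simp add: lineP_def line110_def mult.commute)
  show "lineP P = {Q. valid_pt Q \<and> proj_eq (fst Q) (fst P) \<and> proj_eq (fst (snd Q)) (fst (snd P))}"
    using line_through[OF nz PL[unfolded lineP_def]] by (simp add: lineP_def)
qed

lemma line_X_fib:
  assumes X: "point_set X" and L: "is_line110 L" and P: "P \<in> X \<inter> L"
  shows "L = lineP P" "X \<inter> L = fib X P"
proof -
  obtain l m where lm: "l \<noteq> (0,0)" "m \<noteq> (0,0)" "L = line110 l m" using L by (auto simp: is_line110_def)
  have vP: "valid_pt P" using X P by (auto simp: point_set_def)
  show LP: "L = lineP P" using line_through[OF lm(1,2)] P lm(3) lineP_line(3)[OF vP] by auto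
  show "X \<inter> L = fib X P" unfolding LP lineP_line(3)[OF vP] fib_def using X by (auto simp: point_set_def)
qed

lemma r_lines_Fs:
  assumes X: "point_set X"
  shows "r_lines (k+1) X = card {Phi \<in> Fs X. card Phi = k + 1}"
  unfolding r_lines_def
proof (rule bij_betw_same_card[of "\<lambda>L. X \<inter> L"], rule bij_betwI')
  fix L L' assume L: "L \<in> {L. is_line110 L \<and> card (X \<inter> L) = k + 1}" and L': "L' \<in> {L. is_line110 L \<and> card (X \<inter> L) = k + 1}"
  show "(X \<inter> L = X \<inter> L') = (L = L')"
  proof
    assume eq: "X \<inter> L = X \<inter> L'"
    have "X \<inter> L \<noteq> {}" using L by auto
    then obtain P where P: "P \<in> X \<inter> L" by blast
    then have P': "P \<in> X \<inter> L'" using eq by simp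
    have "L = lineP P" using line_X_fib(1)[OF X _ P] L by simp
    moreover have "L' = lineP P" using line_X_fib(1)[OF X _ P'] L' by simp
    ultimately show "L = L'" by simp
  qed simp
next
  fix L assume L: "L \<in> {L. is_line110 L \<and> card (X \<inter> L) = k + 1}"
  have "X \<inter> L \<noteq> {}" using L by auto
  then obtain P where P: "P \<in> X \<inter> L" by blast
  then show "X \<inter> L \<in> {Phi \<in> Fs X. card Phi = k + 1}"
    using line_X_fib(2)[OF X _ P] L by (auto simp: Fs_def)
next
  fix Phi assume Phi: "Phi \<in> {Phi \<in> Fs X. card Phi = k + 1}"
  then obtain P where P: "P \<in> X" "Phi = fib X P" by (auto simp: Fs_def)
  have vP: "valid_pt P" using X P by (auto simp: point_set_def)
  have "X \<inter> lineP P = fib X P"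
    using line_X_fib(2)[OF X lineP_line(1)[OF vP]] P(1) lineP_line(2)[OF vP] by blast
  then show "\<exists>L\<in>{L. is_line110 L \<and> card (X \<inter> L) = k + 1}. Phi = X \<inter> L"
    using Phi P lineP_line(1)[OF vP] by auto
qed



lemma HX_img:
  assumes X: "point_set X"
  shows "HX X (int i) (int j) (int k) = int (vector_space.dim sF (evX X ` (Rdeg i j k :: 'a::field mpoly6 set)))"
proof -
  have rn: "v6.dim (Rdeg i j k :: 'a mpoly6 set) = v6.dim (Rdeg i j k \<inter> {x. evX X x = 0}) + vF.dim (evX X ` Rdeg i j k)"
    by (rule rank_nullity_gen[OF lin_evX Rdeg_subspace finite_imageI[OF finite_mdeg] Rdeg_span])
  have "Rdeg i j k \<inter> {x. evX X x = 0} = ideal_X X \<inter> Rdeg i j k" by (rule ker_ideal[OF X])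
  then show ?thesis using rn by (simp add: HX_def vdim_def)
qed

lemma comb_identity:
  assumes "finite A"
  shows "2 * int (\<Sum>a\<in>A. min (k+1) (c a)) - int (\<Sum>a\<in>A. min k (c a)) - int (\<Sum>a\<in>A. min (k+2) (c a))
     = int (card {a\<in>A. c a = k + 1})"
proof -
  have "2 * int (\<Sum>a\<in>A. min (k+1) (c a)) - int (\<Sum>a\<in>A. min k (c a)) - int (\<Sum>a\<in>A. min (k+2) (c a))
      = (\<Sum>a\<in>A. 2 * int (min (k+1) (c a)) - int (min k (c a)) - int (min (k+2) (c a)))"
    by (simp add: sum_subtractf sum_distrib_left)
  also have "\<dots> = (\<Sum>a\<in>A. if c a = k + 1 then 1 else 0)"
    by (rule sum.cong) (auto simp: min_def)
  also have "\<dots> = int (card {a\<in>A. c a = k + 1})"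
    using assms by (simp add: sum.inter_filter[symmetric])
  finally show ?thesis .
qed

theorem main_result:
  fixes X :: "'a::field pt3 set" and k :: nat
  assumes X: "point_set X"
  shows "int (r_lines (k + 1) X)
           = dX X (int (t1 X) - 1) (int (t2 X) - 1) (int k)
             - dX X (int (t1 X) - 1) (int (t2 X) - 1) (int k + 1)
       \<and> dX X (int (t1 X) - 1) (int (t2 X) - 1) (int k)
             - dX X (int (t1 X) - 1) (int (t2 X) - 1) (int k + 1)
           = 2 * HX X (int (t1 X) - 1) (int (t2 X) - 1) (int k)
             - HX X (int (t1 X) - 1) (int (t2 X) - 1) (int k - 1)
             - HX X (int (t1 X) - 1) (int (t2 X) - 1) (int k + 1)"
proof -
  have second: "dX X (int (t1 X) - 1) (int (t2 X) - 1) (int k)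
             - dX X (int (t1 X) - 1) (int (t2 X) - 1) (int k + 1)
           = 2 * HX X (int (t1 X) - 1) (int (t2 X) - 1) (int k)
             - HX X (int (t1 X) - 1) (int (t2 X) - 1) (int k - 1)
             - HX X (int (t1 X) - 1) (int (t2 X) - 1) (int k + 1)"
    by (simp add: dX_def)
  show ?thesis
  proof (cases "X = {}")
    case True
    have "t1 X = 0" by (simp add: t1_def True)
    moreover have "r_lines (k + 1) X = 0" by (simp add: r_lines_def True)
    ultimately show ?thesis using second by (simp add: dX_def HX_def)
  next
    case False
    have fX: "finite X" using X by (simp add: point_set_def)
    have t1: "t1 X \<ge> 1" and t2: "t2 X \<ge> 1" using False fX
      by (auto simp: t1_def t2_def Suc_le_eq card_gt_0_iff)
    define G where "G n = (\<Sum>Phi\<in>Fs X. min n (card Phi))" for n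
    have i1: "int (t1 X) - 1 = int (t1 X - 1)" and i2: "int (t2 X) - 1 = int (t2 X - 1)" using t1 t2 by auto
    have H: "HX X (int (t1 X) - 1) (int (t2 X) - 1) (int n) = int (G (n+1))" for n
      unfolding i1 i2 HX_img[OF X] img_dim[OF X] G_def by simp
    have H0: "HX X (int (t1 X) - 1) (int (t2 X) - 1) (int k) = int (G (k+1))" by (rule H)
    have H1: "HX X (int (t1 X) - 1) (int (t2 X) - 1) (int k + 1) = int (G (k+2))"
      using H[of "k+1"] by (simp add: add.commute)
    have Hm: "HX X (int (t1 X) - 1) (int (t2 X) - 1) (int k - 1) = int (G k)"
    proof (cases k)
      case 0 then show ?thesis by (simp add: HX_def G_def)
    next
      case (Suc n) then show ?thesis using H[of n] by simp
    qed
    have "int (r_lines (k + 1) X) = int (card {Phi \<in> Fs X. card Phi = k + 1})"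
      using r_lines_Fs[OF X, of k] by (rule arg_cong)
    also have "\<dots> = 2 * int (G (k+1)) - int (G k) - int (G (k+2))"
      unfolding G_def by (rule comb_identity[symmetric, OF Fs_finite[OF X]])
    finally show ?thesis using second H0 H1 Hm by simp
  qed
qed


theorem theorem3p1:
  fixes X :: "'a::field_char_0 pt3 set" and k :: nat
  assumes "alg_closed TYPE('a)"
    and "point_set X"
  shows "int (r_lines (k + 1) X)
           = dX X (int (t1 X) - 1) (int (t2 X) - 1) (int k)
             - dX X (int (t1 X) - 1) (int (t2 X) - 1) (int k + 1)
       \<and> dX X (int (t1 X) - 1) (int (t2 X) - 1) (int k)
             - dX X (int (t1 X) - 1) (int (t2 X) - 1) (int k + 1)
           = 2 * HX X (int (t1 X) - 1) (int (t2 X) - 1) (int k)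
             - HX X (int (t1 X) - 1) (int (t2 X) - 1) (int k - 1)
             - HX X (int (t1 X) - 1) (int (t2 X) - 1) (int k + 1)"
  by (rule main_result[OF assms(2)])

end
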